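(* The family $R^{\mathrm{co}}_\lambda$, $\lambda>0$, defined by \[ R^{\mathrm{co}}_\lambda f=R^{\mathrm{du}}_\lambda f+\sum_{i\in\mathcal M}\sum_{j=1}^{\kappa(i)}u_{i,j}(f,\lambda)\,\ell^{i,j}_\lambda \] is a Feller resolvent on $C(S_{\mathrm u})$ (it satisfies the Hilbert equation, $\lambda R^{\mathrm{co}}_\lambda f\to f$ as $\lambda\to\infty$, the operators are non-negative and $\lambda R^{\mathrm{co}}_\lambda1_{S_{\mathrm u}}\le1_{S_{\mathrm u}}$). It is conservative (i.e. $\lambda R^{\mathrm{co}}_\lambda1_{S_{\mathrm u}}=1_{S_{\mathrm u}}$) if all $\mathfrak p_{i,j}$ are probability measures.
   Context: Let $S_1,\dots,S_N$ be disjoint compact metrizable separable spaces and $A_i$ generators of Feller semigroups (positive contraction semigroups, not necessarily conservative) on $C(S_i)$ with resolvents $R_{\lambda,i}=(\lambda-A_i)^{-1}$. Assume $A_1,\dots,A_M$ ($1\le M\le N$) are not conservative and $A_{M+1},\dots,A_N$ conservative. For $i\in\mathcal M=\{1,\dots,M\}$, assume the kernel of $A_i$ is trivial and there are continuous functions $\phi^{i,j}$, $j=1,\dots,\kappa(i)$, with $0\le\phi^{i,j}\le1_{S_i}$, $\lambda R_{\lambda,i}\phi^{i,j}\le\phi^{i,j}$ for all $\lambda>0$, $\lambda R_{\lambda,i}\phi^{i,j}\ne\phi^{i,j}$, and $\sum_{j=1}^{\kappa(i)}\phi^{i,j}=1_{S_i}$ (a regular Feller exit boundary with $\kappa(i)$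 exits). Let $\ell^{i,j}_\lambda=\phi^{i,j}-\lambda R_{\lambda,i}\phi^{i,j}$ (Laplace transforms of exit laws), $\mathcal{IJ}=\{(i,j):i\in\mathcal M,1\le j\le\kappa(i)\}$, $\kappa=\sum_{i\in\mathcal M}\kappa(i)$. Let $S_{\mathrm u}$ be the disjoint union of the $S_i$ (functions on $S_i$ extended by zero to $S_{\mathrm u}$; $f_i=f1_{S_i}$), $R^{\mathrm{du}}_\lambda f=\sum_{i=1}^NR_{\lambda,i}f_i$, and $\mathfrak p_{i,j}$, $(i,j)\in\mathcal{IJ}$, Borel sub-probability measures on $S_{\mathrm u}$ (distribution of the restart point after exiting $S_i$ through gate $j$). Let $N_\lambda:\mathbb R^\kappa\to\mathbb R^\kappa$, $(N_\lambda w)_{i,j}=\sum_{k\in\mathcal M}\sum_{l=1}^{\kappa(k)}w_{k,l}\int_{S_k}\ell^{k,l}_\lambda\,\mathrm d\mathfrak p_{i,j}$; then $\|N_\lambda\|<1$ and $M_\lambda=I-N_\lambda$ is invertible. For $f\in C(S_{\mathrm u})$, $u(f,\lambda)=M_\lambda^{-1}\big(\int_{S_{\mathrm u}}R^{\mathrm{du}}_\lambda f\,\mathrm d\mathfrak p_{i,j}\big)_{(i,j)\in\mathcal{IJ}}$. *)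

theory Defs
  imports "HOL-Probability.Probability"
begin

text \<open>C(S): real continuous functions on S, extended by zero outside S.\<close>
definition CS :: "'a::topological_space set \<Rightarrow> ('a \<Rightarrow> real) set" where
  "CS S = {f. continuous_on S f \<and> (\<forall>x. x \<notin> S \<longrightarrow> f x = 0)}"

definition feller_resolvent ::
  "'a::topological_space set \<Rightarrow> (real \<Rightarrow> ('a \<Rightarrow> real) \<Rightarrow> ('a \<Rightarrow> real)) \<Rightarrow> bool" where
  "feller_resolvent S R \<longleftrightarrow>
     (\<forall>l>0. \<forall>f\<in>CS S. R l f \<in> CS S) \<and>
     (\<forall>l>0. \<forall>f\<in>CS S. \<forall>g\<in>CS S. \<forall>a b::real.
        R l (\<lambda>x. a * f x + b * g x) = (\<lambda>x. a * R l f x + b * R l g x)) \<and>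
     (\<forall>l>0. \<forall>m>0. \<forall>f\<in>CS S. \<forall>x. R l f x - R m f x = (m - l) * R l (R m f) x) \<and>
     (\<forall>f\<in>CS S. uniform_limit S (\<lambda>l x. l * R l f x) f at_top) \<and>
     (\<forall>l>0. \<forall>f\<in>CS S. (\<forall>x\<in>S. 0 \<le> f x) \<longrightarrow> (\<forall>x\<in>S. 0 \<le> R l f x)) \<and>
     (\<forall>l>0. \<forall>x\<in>S. l * R l (indicator S) x \<le> 1)"

definition conservative_resolvent ::
  "'a::topological_space set \<Rightarrow> (real \<Rightarrow> ('a \<Rightarrow> real) \<Rightarrow> ('a \<Rightarrow> real)) \<Rightarrow> bool" where
  "conservative_resolvent S R \<longleftrightarrow> (\<forall>l>0. \<forall>x\<in>S. l * R l (indicator S) x = 1)"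

text \<open>The generator A of a resolvent: A f = g iff f = R_lam (lam f - g) for all lam > 0
  (i.e. A = lam - R_lam^{-1} on D(A) = range R_lam).\<close>
definition resolvent_generator ::
  "'a::topological_space set \<Rightarrow> (real \<Rightarrow> ('a \<Rightarrow> real) \<Rightarrow> ('a \<Rightarrow> real))
     \<Rightarrow> ('a \<Rightarrow> real) \<Rightarrow> ('a \<Rightarrow> real) \<Rightarrow> bool" where
  "resolvent_generator S R f g \<longleftrightarrow> f \<in> CS S \<and> g \<in> CS S \<and>
     (\<forall>l>0. f = R l (\<lambda>x. l * f x - g x))"

text \<open>Laplace transform of the exit law: ell_lam = phi - lam R_lam phi.\<close>
definition exit_ell :: "(real \<Rightarrow> ('a \<Rightarrow> real) \<Rightarrow> ('a \<Rightarrow> real)) \<Rightarrow> ('a \<Rightarrow> real) \<Rightarrow> real \<Rightarrow> 'a \<Rightarrow> real" where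
  "exit_ell R \<phi> l x = \<phi> x - l * R l \<phi> x"

definition idx_IJ :: "nat \<Rightarrow> (nat \<Rightarrow> nat) \<Rightarrow> (nat \<times> nat) set" where
  "idx_IJ M \<kappa> = {(i, j). i \<in> {1..M} \<and> j \<in> {1..\<kappa> i}}"

text \<open>Entries of the matrix N_lam: (N_lam w)_q = sum_r N_mat q r * w_r.\<close>
definition N_mat ::
  "(nat \<Rightarrow> 'a::topological_space set) \<Rightarrow> (nat \<Rightarrow> real \<Rightarrow> ('a \<Rightarrow> real) \<Rightarrow> ('a \<Rightarrow> real))
   \<Rightarrow> (nat \<Rightarrow> nat \<Rightarrow> 'a \<Rightarrow> real) \<Rightarrow> (nat \<times> nat \<Rightarrow> 'a measure) \<Rightarrow> real
   \<Rightarrow> nat \<times> nat \<Rightarrow> nat \<times> nat \<Rightarrow> real" where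
  "N_mat S R \<phi> p l q r =
     set_lebesgue_integral (p q) (S (fst r)) (exit_ell (R (fst r)) (\<phi> (fst r) (snd r)) l)"

definition S_union :: "nat \<Rightarrow> (nat \<Rightarrow> 'a set) \<Rightarrow> 'a set" where
  "S_union Nn S = (\<Union>i\<in>{1..Nn}. S i)"

definition R_du ::
  "nat \<Rightarrow> (nat \<Rightarrow> 'a set) \<Rightarrow> (nat \<Rightarrow> real \<Rightarrow> ('a \<Rightarrow> real) \<Rightarrow> ('a \<Rightarrow> real))
   \<Rightarrow> real \<Rightarrow> ('a \<Rightarrow> real) \<Rightarrow> 'a \<Rightarrow> real" where
  "R_du Nn S R l f = (\<lambda>x. \<Sum>i\<in>{1..Nn}. R i l (\<lambda>y. f y * indicator (S i) y) x)"

text \<open>u(f,lam) = M_lam^{-1} b, i.e. the unique vector w on IJ with (I - N_lam) w = b,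
  where b_q = integral of R^du_lam f w.r.t. p_q.\<close>
definition u_coef ::
  "nat \<Rightarrow> nat \<Rightarrow> (nat \<Rightarrow> nat) \<Rightarrow> (nat \<Rightarrow> 'a::topological_space set)
   \<Rightarrow> (nat \<Rightarrow> real \<Rightarrow> ('a \<Rightarrow> real) \<Rightarrow> ('a \<Rightarrow> real))
   \<Rightarrow> (nat \<Rightarrow> nat \<Rightarrow> 'a \<Rightarrow> real) \<Rightarrow> (nat \<times> nat \<Rightarrow> 'a measure) \<Rightarrow> real
   \<Rightarrow> ('a \<Rightarrow> real) \<Rightarrow> nat \<times> nat \<Rightarrow> real" where
  "u_coef Nn M \<kappa> S R \<phi> p l f =
     (THE w. (\<forall>q. q \<notin> idx_IJ M \<kappa> \<longrightarrow> w q = 0) \<and>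
        (\<forall>q\<in>idx_IJ M \<kappa>.
           w q - (\<Sum>r\<in>idx_IJ M \<kappa>. N_mat S R \<phi> p l q r * w r)
             = integral\<^sup>L (p q) (R_du Nn S R l f)))"

definition R_co ::
  "nat \<Rightarrow> nat \<Rightarrow> (nat \<Rightarrow> nat) \<Rightarrow> (nat \<Rightarrow> 'a::topological_space set)
   \<Rightarrow> (nat \<Rightarrow> real \<Rightarrow> ('a \<Rightarrow> real) \<Rightarrow> ('a \<Rightarrow> real))
   \<Rightarrow> (nat \<Rightarrow> nat \<Rightarrow> 'a \<Rightarrow> real) \<Rightarrow> (nat \<times> nat \<Rightarrow> 'a measure)
   \<Rightarrow> real \<Rightarrow> ('a \<Rightarrow> real) \<Rightarrow> 'a \<Rightarrow> real" where
  "R_co Nn M \<kappa> S R \<phi> p l f =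
     (\<lambda>x. R_du Nn S R l f x +
        (\<Sum>q\<in>idx_IJ M \<kappa>. u_coef Nn M \<kappa> S R \<phi> p l f q * exit_ell (R (fst q)) (\<phi> (fst q) (snd q)) l x))"

end

theory Submission
  imports Defs
begin

lemma CS_zero[simp]: "(\<lambda>x. 0) \<in> CS S"
  by (simp add: CS_def)

lemma CS_lin:
  assumes "f \<in> CS S" "g \<in> CS S"
  shows "(\<lambda>x. a * f x + b * g x) \<in> CS S"
proof -
  have "continuous_on S (\<lambda>x. a * f x + b * g x)"
    using assms unfolding CS_def by (intro continuous_on_add continuous_on_mult_left) auto
  then show ?thesis using assms unfolding CS_def by simp
qed

lemma CS_sum:
  assumes "finite Q" "\<And>q. q \<in> Q \<Longrightarrow> h q \<in> CS S"
  shows "(\<lambda>x. \<Sum>q\<in>Q. c q * h q x) \<in> CS S"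
proof -
  have "continuous_on S (\<lambda>x. \<Sum>q\<in>Q. c q * h q x)"
    using assms unfolding CS_def by (intro continuous_on_sum continuous_on_mult_left) auto
  then show ?thesis using assms unfolding CS_def by simp
qed

lemma CS_indicator[simp]: "indicator S \<in> CS S"
proof -
  have "continuous_on S (\<lambda>x. 1::real)" by simp
  then have "continuous_on S (indicator S :: _ \<Rightarrow> real)"
    by (rule continuous_on_cong[THEN iffD1, rotated 2]) auto
  then show ?thesis by (simp add: CS_def)
qed

lemma CS_zero_out: "f \<in> CS S \<Longrightarrow> x \<notin> S \<Longrightarrow> f x = 0"
  by (simp add: CS_def)

lemma CS_cont: "f \<in> CS S \<Longrightarrow> continuous_on S f"
  by (simp add: CS_def)

locale fres =
  fixes S :: "'a::topological_space set" and R :: "real \<Rightarrow> ('a \<Rightarrow> real) \<Rightarrow> ('a \<Rightarrow> real)"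
  assumes fr: "feller_resolvent S R"
begin

lemma frD: "(\<forall>l>0. \<forall>f\<in>CS S. R l f \<in> CS S)"
     "(\<forall>l>0. \<forall>f\<in>CS S. \<forall>g\<in>CS S. \<forall>a b::real.
        R l (\<lambda>x. a * f x + b * g x) = (\<lambda>x. a * R l f x + b * R l g x))"
     "(\<forall>l>0. \<forall>m>0. \<forall>f\<in>CS S. \<forall>x. R l f x - R m f x = (m - l) * R l (R m f) x)"
     "(\<forall>f\<in>CS S. uniform_limit S (\<lambda>l x. l * R l f x) f at_top)"
     "(\<forall>l>0. \<forall>f\<in>CS S. (\<forall>x\<in>S. 0 \<le> f x) \<longrightarrow> (\<forall>x\<in>S. 0 \<le> R l f x))"
     "(\<forall>l>0. \<forall>x\<in>S. l * R l (indicator S) x \<le> 1)"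
  using fr unfolding feller_resolvent_def by simp_all

lemma CS_R: "l > 0 \<Longrightarrow> f \<in> CS S \<Longrightarrow> R l f \<in> CS S"
  using frD by simp

lemma lin: "l > 0 \<Longrightarrow> f \<in> CS S \<Longrightarrow> g \<in> CS S \<Longrightarrow>
   R l (\<lambda>x. a * f x + b * g x) = (\<lambda>x. a * R l f x + b * R l g x)"
  using frD by simp

lemma hilbert: "l > 0 \<Longrightarrow> m > 0 \<Longrightarrow> f \<in> CS S \<Longrightarrow> R l f x - R m f x = (m - l) * R l (R m f) x"
  using frD by simp

lemma ulim: "f \<in> CS S \<Longrightarrow> uniform_limit S (\<lambda>l x. l * R l f x) f at_top"
  using frD by simp

lemma pos: "l > 0 \<Longrightarrow> f \<in> CS S \<Longrightarrow> (\<And>x. x \<in> S \<Longrightarrow> 0 \<le> f x) \<Longrightarrow> x \<in> S \<Longrightarrow> 0 \<le> R l f x"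
  using frD by simp

lemma sub1: "l > 0 \<Longrightarrow> x \<in> S \<Longrightarrow> l * R l (indicator S) x \<le> 1"
  using frD by simp

lemma zero_out: "l > 0 \<Longrightarrow> f \<in> CS S \<Longrightarrow> x \<notin> S \<Longrightarrow> R l f x = 0"
  using CS_R CS_zero_out by blast

lemma R_zero: "l > 0 \<Longrightarrow> R l (\<lambda>x. 0) = (\<lambda>x. 0)"
  using lin[of l "\<lambda>x. 0" "\<lambda>x. 0" 0 0] by (simp del: CS_zero add: CS_def)

lemma R_sum:
  assumes l: "l > 0" and fin: "finite Q" and hQ: "\<And>q. q \<in> Q \<Longrightarrow> h q \<in> CS S"
  shows "R l (\<lambda>x. \<Sum>q\<in>Q. c q * h q x) = (\<lambda>x. \<Sum>q\<in>Q. c q * R l (h q) x)"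
  using fin hQ
proof (induction Q rule: finite_induct)
  case empty
  show ?case using R_zero[OF l] by simp
next
  case (insert q Q)
  have "R l (\<lambda>x. \<Sum>q\<in>insert q Q. c q * h q x) = R l (\<lambda>x. c q * h q x + 1 * (\<Sum>q\<in>Q. c q * h q x))"
    using insert by simp
  also have "\<dots> = (\<lambda>x. c q * R l (h q) x + 1 * R l (\<lambda>x. \<Sum>q\<in>Q. c q * h q x) x)"
    using insert l by (intro lin CS_sum) auto
  also have "\<dots> = (\<lambda>x. \<Sum>q\<in>insert q Q. c q * R l (h q) x)"
    using insert by simp
  finally show ?case .
qed

lemma uniform_anywhere:
  assumes "f \<in> CS S"
  shows "uniform_limit T (\<lambda>l x. l * R l f x) f at_top"
proof (rule uniform_limitI)
  fix e :: real assume e: "e > 0"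
  have "\<forall>\<^sub>F l in at_top. \<forall>x\<in>S. dist (l * R l f x) (f x) < e"
    using uniform_limitD[OF ulim[OF assms] e] .
  moreover have "\<forall>\<^sub>F l in at_top. (l::real) > 0" by (rule eventually_gt_at_top)
  ultimately show "\<forall>\<^sub>F l in at_top. \<forall>x\<in>T. dist (l * R l f x) (f x) < e"
  proof eventually_elim
    case (elim l)
    show ?case
    proof
      fix x assume "x \<in> T"
      show "dist (l * R l f x) (f x) < e"
      proof (cases "x \<in> S")
        case True then show ?thesis using elim by auto
      next
        case False then show ?thesis using zero_out[OF elim(2) assms False] CS_zero_out[OF assms False] e by simp
      qed
    qed
  qed
qed

lemma strict_pos:
  assumes "l > 0" "x \<in> S"
  shows "0 < R l (indicator S) x"
proof (rule ccontr)
  assume "\<not> ?thesis"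
  then have le: "R l (indicator S) x \<le> 0" by simp
  have "\<forall>\<^sub>F m in at_top. \<forall>y\<in>S. dist (m * R m (indicator S) y) (indicator S y) < 1/2"
    using uniform_limitD[OF ulim[OF CS_indicator], of "1/2"] by simp
  moreover have "\<forall>\<^sub>F m in at_top. (m::real) > l" by (rule eventually_gt_at_top)
  ultimately have "\<forall>\<^sub>F m in at_top. (\<forall>y\<in>S. dist (m * R m (indicator S) y) (indicator S y) < 1/2) \<and> m > l"
    by (rule eventually_conj)
  then obtain m where elim: "\<forall>y\<in>S. dist (m * R m (indicator S) y) (indicator S y) < 1/2" "m > l"
    unfolding eventually_at_top_linorder by (meson order_refl)
  show False
  proof -
    have m: "m > 0" using assms elim(2) by simp
    have "0 \<le> R l (R m (indicator S)) x"
      using pos[OF assms(1) CS_R[OF m CS_indicator] _ assms(2)] pos[OF m CS_indicator] by auto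
    moreover have "R l (indicator S) x - R m (indicator S) x = (m - l) * R l (R m (indicator S)) x"
      using hilbert[OF assms(1) m CS_indicator] .
    moreover have "0 \<le> (m - l) * R l (R m (indicator S)) x"
      using calculation(1) elim(2) by simp
    ultimately have "R m (indicator S) x \<le> 0" using le by linarith
    then have "m * R m (indicator S) x \<le> 0" using m by (simp add: mult_nonneg_nonpos)
    moreover have "dist (m * R m (indicator S) x) 1 < 1/2" using elim(1) assms(2) by auto
    ultimately show False by (simp add: dist_real_def)
  qed
qed

end

lemma (in fres) row_bound:
  assumes "compact S" "l > 0"
  shows "\<exists>c<1. \<forall>x\<in>S. 1 - l * R l (indicator S) x \<le> c"
proof (cases "S = {}")
  case True then show ?thesis by (intro exI[of _ 0]) auto
next
  case False
  have "continuous_on S (\<lambda>x. l * R l (indicator S) x)"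
    using CS_cont[OF CS_R[OF assms(2) CS_indicator]] by (intro continuous_intros)
  from continuous_attains_inf[OF assms(1) False this] obtain x0 where
    x0: "x0 \<in> S" "\<And>y. y \<in> S \<Longrightarrow> l * R l (indicator S) x0 \<le> l * R l (indicator S) y" by blast
  have "0 < l * R l (indicator S) x0" using strict_pos[OF assms(2) x0(1)] assms(2) by simp
  then show ?thesis
  proof (intro exI[of _ "1 - l * R l (indicator S) x0"] conjI ballI)
    fix y assume "y \<in> S"
    then show "1 - l * R l (indicator S) y \<le> 1 - l * R l (indicator S) x0" using x0(2)[of y] by linarith
  qed simp
qed

locale lsys =
  fixes J :: "'b set" and A :: "'b \<Rightarrow> 'b \<Rightarrow> real" and c :: real
  assumes fin: "finite J" and Apos: "\<And>q r. q \<in> J \<Longrightarrow> r \<in> J \<Longrightarrow> 0 \<le> A q r"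
    and rows: "\<And>q. q \<in> J \<Longrightarrow> (\<Sum>r\<in>J. A q r) \<le> c" and c1: "c < 1"
begin

lemma bound:
  assumes eq: "\<And>q. q \<in> J \<Longrightarrow> w q - (\<Sum>r\<in>J. A q r * w r) = b q"
    and bB: "\<And>q. q \<in> J \<Longrightarrow> \<bar>b q\<bar> \<le> B" and q: "q \<in> J"
  shows "\<bar>w q\<bar> \<le> B / (1 - c)"
proof -
  define m where "m = Max ((\<lambda>r. \<bar>w r\<bar>) ` J)"
  have ne: "J \<noteq> {}" using q by auto
  have mge: "\<And>r. r \<in> J \<Longrightarrow> \<bar>w r\<bar> \<le> m" unfolding m_def using fin by auto
  have "m \<in> (\<lambda>r. \<bar>w r\<bar>) ` J" unfolding m_def using fin ne by (intro Max_in) auto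
  then obtain q0 where q0: "q0 \<in> J" "m = \<bar>w q0\<bar>" by auto
  have m0: "0 \<le> m" using q0 by simp
  have "\<bar>w q0\<bar> = \<bar>b q0 + (\<Sum>r\<in>J. A q0 r * w r)\<bar>" using eq[OF q0(1)] by (simp add: algebra_simps)
  also have "\<dots> \<le> \<bar>b q0\<bar> + \<bar>\<Sum>r\<in>J. A q0 r * w r\<bar>" by (rule abs_triangle_ineq)
  also have "\<bar>\<Sum>r\<in>J. A q0 r * w r\<bar> \<le> (\<Sum>r\<in>J. \<bar>A q0 r * w r\<bar>)" by (rule sum_abs)
  also have "\<dots> \<le> (\<Sum>r\<in>J. A q0 r * m)"
  proof (rule sum_mono)
    fix r assume r: "r \<in> J"
    show "\<bar>A q0 r * w r\<bar> \<le> A q0 r * m"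
      using Apos[OF q0(1) r] mge[OF r] by (simp add: abs_mult mult_left_mono)
  qed
  also have "\<dots> = (\<Sum>r\<in>J. A q0 r) * m" by (simp add: sum_distrib_right)
  also have "\<dots> \<le> c * m" using rows[OF q0(1)] m0 by (simp add: mult_right_mono)
  finally have "m \<le> B + c * m" using bB[OF q0(1)] q0(2) by linarith
  then have "m * (1 - c) \<le> B" by (simp add: algebra_simps)
  then have "m \<le> B / (1 - c)" using c1 by (simp add: pos_le_divide_eq)
  then show ?thesis using mge[OF q] by linarith
qed

lemma nonneg:
  assumes eq: "\<And>q. q \<in> J \<Longrightarrow> w q - (\<Sum>r\<in>J. A q r * w r) = b q"
    and b0: "\<And>q. q \<in> J \<Longrightarrow> 0 \<le> b q" and q: "q \<in> J"
  shows "0 \<le> w q"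
proof (rule ccontr)
  assume neg: "\<not> ?thesis"
  define m where "m = Min (w ` J)"
  have ne: "J \<noteq> {}" using q by auto
  have mle: "\<And>r. r \<in> J \<Longrightarrow> m \<le> w r" unfolding m_def using fin by auto
  have "m \<in> w ` J" unfolding m_def using fin ne by (intro Min_in) auto
  then obtain q0 where q0: "q0 \<in> J" "m = w q0" by auto
  have m0: "m < 0" using mle[OF q] neg by linarith
  have "m = b q0 + (\<Sum>r\<in>J. A q0 r * w r)" using eq[OF q0(1)] q0(2) by (simp add: algebra_simps)
  also have "\<dots> \<ge> (\<Sum>r\<in>J. A q0 r * w r)" using b0[OF q0(1)] by simp
  also have "(\<Sum>r\<in>J. A q0 r * w r) \<ge> (\<Sum>r\<in>J. A q0 r * m)"
    by (rule sum_mono) (use Apos[OF q0(1)] mle in \<open>auto intro: mult_left_mono\<close>)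
  also have "(\<Sum>r\<in>J. A q0 r * m) = (\<Sum>r\<in>J. A q0 r) * m" by (simp add: sum_distrib_right)
  also have "\<dots> \<ge> c * m" using rows[OF q0(1)] m0 by (simp add: mult_right_mono_neg)
  finally have cm: "c * m \<le> m" .
  have "(1 - c) * m < 0" using c1 m0 by (simp add: mult_pos_neg)
  then show False using cm by (simp add: algebra_simps)
qed

lemma exists: "\<exists>w. (\<forall>q. q \<notin> J \<longrightarrow> w q = 0) \<and> (\<forall>q\<in>J. w q - (\<Sum>r\<in>J. A q r * w r) = b q)"
proof -
  define c0 where "c0 = max c 0"
  have c00: "0 \<le> c0" and c01: "c0 < 1" using c1 by (auto simp: c0_def)
  define T where "T = (\<lambda>v q. if q \<in> J then (\<Sum>r\<in>J. A q r * v r) else (0::real))"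
  define v0 where "v0 = (\<lambda>q. if q \<in> J then b q else 0)"
  define v where "v n = (T ^^ n) v0" for n
  define B where "B = (\<Sum>q\<in>J. \<bar>b q\<bar>)"
  have B0: "0 \<le> B" unfolding B_def by (rule sum_nonneg) auto
  have vS: "v (Suc n) = T (v n)" for n by (simp add: v_def)
  have vb: "\<bar>v n q\<bar> \<le> c0 ^ n * B" for n q
  proof (induction n arbitrary: q)
    case 0
    show ?case
    proof (cases "q \<in> J")
      case True
      then show ?thesis unfolding v_def v0_def B_def using fin
        by (simp add: member_le_sum[where f="\<lambda>q. \<bar>b q\<bar>"])
    next
      case False then show ?thesis using B0 by (simp add: v_def v0_def)
    qed
  next
    case (Suc n)
    show ?case
    proof (cases "q \<in> J")
      case True
      have "\<bar>v (Suc n) q\<bar> = \<bar>\<Sum>r\<in>J. A q r * v n r\<bar>" using True by (simp add: vS T_def)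
      also have "\<dots> \<le> (\<Sum>r\<in>J. \<bar>A q r * v n r\<bar>)" by (rule sum_abs)
      also have "\<dots> \<le> (\<Sum>r\<in>J. A q r * (c0 ^ n * B))"
      proof (rule sum_mono)
        fix r assume r: "r \<in> J"
        show "\<bar>A q r * v n r\<bar> \<le> A q r * (c0 ^ n * B)"
          using Apos[OF True r] Suc.IH[of r] by (simp add: abs_mult mult_left_mono)
      qed
      also have "\<dots> = (\<Sum>r\<in>J. A q r) * (c0 ^ n * B)" by (simp add: sum_distrib_right)
      also have "\<dots> \<le> c0 * (c0 ^ n * B)"
        using rows[OF True] c00 B0 by (intro mult_right_mono) (auto simp: c0_def)
      finally show ?thesis by simp
    next
      case False then show ?thesis using B0 c00 by (simp add: vS T_def)
    qed
  qed
  have summ: "summable (\<lambda>n. v n q)" for q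
  proof (rule summable_comparison_test)
    show "\<exists>N. \<forall>n\<ge>N. norm (v n q) \<le> c0 ^ n * B" using vb by auto
    show "summable (\<lambda>n. c0 ^ n * B)" using c00 c01 by (intro summable_mult2 summable_geometric) simp
  qed
  define w where "w q = (\<Sum>n. v n q)" for q
  have out: "v n q = 0" if "q \<notin> J" for n q
  proof (cases n)
    case 0 then show ?thesis using that by (simp add: v_def v0_def)
  next
    case (Suc k) then show ?thesis using that by (simp add: vS T_def)
  qed
  show ?thesis
  proof (intro exI[of _ w] conjI allI impI ballI)
    fix q assume "q \<notin> J" then show "w q = 0" by (simp add: w_def out)
  next
    fix q assume q: "q \<in> J"
    have "(\<Sum>r\<in>J. A q r * w r) = (\<Sum>r\<in>J. \<Sum>n. A q r * v n r)"
      unfolding w_def by (intro sum.cong refl suminf_mult[symmetric] summ)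
    also have "\<dots> = (\<Sum>n. \<Sum>r\<in>J. A q r * v n r)"
      by (rule suminf_sum[symmetric]) (intro summable_mult summ)
    also have "\<dots> = (\<Sum>n. v (Suc n) q)"
    proof -
      have step: "v (Suc n) q = (\<Sum>r\<in>J. A q r * v n r)" for n
        using q unfolding vS T_def by simp
      have e: "(\<lambda>n. v (Suc n) q) = (\<lambda>n. \<Sum>r\<in>J. A q r * v n r)" by (rule ext) (rule step)
      show ?thesis by (subst e) (rule refl)
    qed
    also have "\<dots> = w q - v 0 q" unfolding w_def by (rule suminf_split_head[OF summ])
    finally have A1: "(\<Sum>r\<in>J. A q r * w r) = w q - v 0 q" .
    have A3: "v 0 q = b q" using q by (simp add: v_def v0_def)
    show "w q - (\<Sum>r\<in>J. A q r * w r) = b q" using A1 A3 by linarith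
  qed
qed

lemma unique:
  assumes "\<forall>q. q \<notin> J \<longrightarrow> w q = 0" "\<forall>q\<in>J. w q - (\<Sum>r\<in>J. A q r * w r) = b q"
    and "\<forall>q. q \<notin> J \<longrightarrow> w' q = 0" "\<forall>q\<in>J. w' q - (\<Sum>r\<in>J. A q r * w' r) = b q"
  shows "w = w'"
proof
  fix q
  show "w q = w' q"
  proof (cases "q \<in> J")
    case True
    have "\<bar>w q - w' q\<bar> \<le> 0 / (1 - c)"
    proof (rule bound[where b="\<lambda>q. 0"])
      fix q assume q: "q \<in> J"
      have "(\<Sum>r\<in>J. A q r * (w r - w' r)) = (\<Sum>r\<in>J. A q r * w r) - (\<Sum>r\<in>J. A q r * w' r)"
        by (simp add: algebra_simps sum_subtractf)
      then show "w q - w' q - (\<Sum>r\<in>J. A q r * (w r - w' r)) = 0"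
        using bspec[OF assms(2) q] bspec[OF assms(4) q] by linarith
    qed (use True in auto)
    then show ?thesis by simp
  next
    case False then show ?thesis using assms by simp
  qed
qed

lemma ex1: "\<exists>!w. (\<forall>q. q \<notin> J \<longrightarrow> w q = 0) \<and> (\<forall>q\<in>J. w q - (\<Sum>r\<in>J. A q r * w r) = b q)"
proof (rule ex_ex1I)
  show "\<exists>w. (\<forall>q. q \<notin> J \<longrightarrow> w q = 0) \<and> (\<forall>q\<in>J. w q - (\<Sum>r\<in>J. A q r * w r) = b q)"
    by (rule exists)
next
  fix w w' assume "(\<forall>q. q \<notin> J \<longrightarrow> w q = 0) \<and> (\<forall>q\<in>J. w q - (\<Sum>r\<in>J. A q r * w r) = b q)"
    "(\<forall>q. q \<notin> J \<longrightarrow> w' q = 0) \<and> (\<forall>q\<in>J. w' q - (\<Sum>r\<in>J. A q r * w' r) = b q)"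
  then show "w = w'" using unique[of w b w'] by simp
qed

end

lemma CS_sum1: "finite Q \<Longrightarrow> (\<And>q. q \<in> Q \<Longrightarrow> h q \<in> CS S) \<Longrightarrow> (\<lambda>x. \<Sum>q\<in>Q. h q x) \<in> CS S"
  using CS_sum[of Q h S "\<lambda>_. 1"] by simp

lemma sum_single:
  assumes "finite I" "i \<in> I" "\<And>k. k \<in> I \<Longrightarrow> k \<noteq> i \<Longrightarrow> g k = 0"
  shows "sum g I = g i"
proof -
  have "sum g I = g i + sum g (I - {i})" using assms(1,2) by (rule sum.remove)
  also have "sum g (I - {i}) = 0" using assms(3) by (intro sum.neutral) auto
  finally show ?thesis by simp
qed

locale main =
  fixes Nn M :: nat and S :: "nat \<Rightarrow> 'a::metric_space set"
    and R :: "nat \<Rightarrow> real \<Rightarrow> ('a \<Rightarrow> real) \<Rightarrow> ('a \<Rightarrow> real)"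
    and \<kappa> :: "nat \<Rightarrow> nat" and \<phi> :: "nat \<Rightarrow> nat \<Rightarrow> 'a \<Rightarrow> real" and p :: "nat \<times> nat \<Rightarrow> 'a measure"
  assumes M_le: "M \<le> Nn"
    and S_compact: "\<And>i. i \<in> {1..Nn} \<Longrightarrow> compact (S i)"
    and S_disjoint: "\<And>i k. i \<in> {1..Nn} \<Longrightarrow> k \<in> {1..Nn} \<Longrightarrow> i \<noteq> k \<Longrightarrow> S i \<inter> S k = {}"
    and R_feller: "\<And>i. i \<in> {1..Nn} \<Longrightarrow> feller_resolvent (S i) (R i)"
    and conservative: "\<And>i. i \<in> {M+1..Nn} \<Longrightarrow> conservative_resolvent (S i) (R i)"
    and phi_cont: "\<And>i j. i \<in> {1..M} \<Longrightarrow> j \<in> {1..\<kappa> i} \<Longrightarrow> \<phi> i j \<in> CS (S i)"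
    and phi_excessive: "\<And>i j l x. i \<in> {1..M} \<Longrightarrow> j \<in> {1..\<kappa> i} \<Longrightarrow> l > 0 \<Longrightarrow> x \<in> S i
                       \<Longrightarrow> l * R i l (\<phi> i j) x \<le> \<phi> i j x"
    and phi_sum: "\<And>i x. i \<in> {1..M} \<Longrightarrow> x \<in> S i \<Longrightarrow> (\<Sum>j\<in>{1..\<kappa> i}. \<phi> i j x) = 1"
    and p_sets: "\<And>q. q \<in> idx_IJ M \<kappa> \<Longrightarrow> sets (p q) = sets (restrict_space borel (S_union Nn S))"
    and p_subprob: "\<And>q. q \<in> idx_IJ M \<kappa> \<Longrightarrow> subprob_space (p q)"
begin

abbreviation "Idx \<equiv> {1..Nn}"
abbreviation "IdxM \<equiv> {1..M}"
abbreviation "IJ \<equiv> idx_IJ M \<kappa>"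
abbreviation "Su \<equiv> S_union Nn S"
abbreviation "ell q l \<equiv> exit_ell (R (fst q)) (\<phi> (fst q) (snd q)) l"
abbreviation "Rd l f \<equiv> R_du Nn S R l f"
abbreviation "Nm l q r \<equiv> N_mat S R \<phi> p l q r"
abbreviation "bv l f q \<equiv> integral\<^sup>L (p q) (Rd l f)"
abbreviation "uc l f \<equiv> u_coef Nn M \<kappa> S R \<phi> p l f"
abbreviation "Rc l f \<equiv> R_co Nn M \<kappa> S R \<phi> p l f"

lemma IM_sub: "i \<in> IdxM \<Longrightarrow> i \<in> Idx" using M_le by auto
lemma IJ_fst: "q \<in> IJ \<Longrightarrow> fst q \<in> IdxM" by (auto simp: idx_IJ_def)
lemma IJ_fst': "q \<in> IJ \<Longrightarrow> fst q \<in> Idx" using IJ_fst IM_sub by blast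
lemma IJ_snd: "q \<in> IJ \<Longrightarrow> snd q \<in> {1..\<kappa> (fst q)}" by (auto simp: idx_IJ_def)
lemma IJ_Sigma: "IJ = Sigma IdxM (\<lambda>i. {1..\<kappa> i})" by (auto simp: idx_IJ_def)
lemma fin_IJ: "finite IJ" by (simp add: IJ_Sigma)

lemma Rf: "i \<in> Idx \<Longrightarrow> fres (S i) (R i)" using R_feller by (simp add: fres_def)

lemma Su_eq: "Su = (\<Union>i\<in>Idx. S i)" by (simp add: S_union_def)
lemma S_sub: "i \<in> Idx \<Longrightarrow> S i \<subseteq> Su" by (auto simp: S_union_def)
lemma compact_Su: "compact Su" unfolding Su_eq by (intro compact_UN) (auto simp: S_compact)
lemma closed_S: "i \<in> Idx \<Longrightarrow> closed (S i)" by (simp add: S_compact compact_imp_closed)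
lemma S_notin: "i \<in> Idx \<Longrightarrow> k \<in> Idx \<Longrightarrow> k \<noteq> i \<Longrightarrow> x \<in> S k \<Longrightarrow> x \<notin> S i"
  using S_disjoint by blast

lemma lift:
  assumes i: "i \<in> Idx" and g: "g \<in> CS (S i)"
  shows "g \<in> CS Su"
proof -
  have "continuous_on (\<Union>k\<in>Idx. S k) g"
  proof (rule continuous_on_closed_Union)
    fix k assume k: "k \<in> Idx"
    show "closed (S k)" using k by (rule closed_S)
    show "continuous_on (S k) g"
    proof (cases "k = i")
      case True then show ?thesis using g by (simp add: CS_def)
    next
      case False
      have "continuous_on (S k) g = continuous_on (S k) (\<lambda>x. 0::real)"
        using S_notin[OF i k False] g by (intro continuous_on_cong) (auto simp: CS_def)
      then show ?thesis by simp
    qed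
  qed simp
  moreover have "g x = 0" if "x \<notin> Su" for x
    using that S_sub[OF i] g by (auto simp: CS_def)
  ultimately show ?thesis unfolding CS_def Su_eq by auto
qed

lemma restr:
  assumes i: "i \<in> Idx" and f: "f \<in> CS Su"
  shows "(\<lambda>y. f y * indicator (S i) y) \<in> CS (S i)"
proof -
  have "continuous_on (S i) f" using f S_sub[OF i] by (auto simp: CS_def intro: continuous_on_subset)
  moreover have "continuous_on (S i) (\<lambda>y. f y * indicator (S i) y) = continuous_on (S i) f"
    by (intro continuous_on_cong) auto
  ultimately show ?thesis by (simp add: CS_def)
qed

lemma Rd_eq: "Rd l f = (\<lambda>x. \<Sum>i\<in>Idx. R i l (\<lambda>y. f y * indicator (S i) y) x)"
  by (simp add: R_du_def)

lemma Rd_CS: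
  assumes l: "l > 0" and f: "f \<in> CS Su"
  shows "Rd l f \<in> CS Su"
  unfolding Rd_eq
proof (rule CS_sum1)
  fix i assume i: "i \<in> Idx"
  show "R i l (\<lambda>y. f y * indicator (S i) y) \<in> CS Su"
    by (rule lift[OF i fres.CS_R[OF Rf[OF i] l restr[OF i f]]])
qed simp

lemma Rd_on:
  assumes l: "l > 0" and f: "f \<in> CS Su" and i: "i \<in> Idx" and x: "x \<in> S i"
  shows "Rd l f x = R i l (\<lambda>y. f y * indicator (S i) y) x"
  unfolding Rd_eq
proof (rule sum_single)
  fix k assume k: "k \<in> Idx" "k \<noteq> i"
  show "R k l (\<lambda>y. f y * indicator (S k) y) x = 0"
    using fres.zero_out[OF Rf[OF k(1)] l restr[OF k(1) f]] S_notin[OF k(1) i] k(2) x by blast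
qed (use i in auto)

lemma Rd_out:
  assumes l: "l > 0" and f: "f \<in> CS Su" and x: "x \<notin> Su"
  shows "Rd l f x = 0"
  unfolding Rd_eq
proof (rule sum.neutral, rule ballI)
  fix k assume k: "k \<in> Idx"
  show "R k l (\<lambda>y. f y * indicator (S k) y) x = 0"
    using fres.zero_out[OF Rf[OF k] l restr[OF k f]] S_sub[OF k] x by blast
qed

lemma ell_eq: "ell q l = (\<lambda>x. 1 * \<phi> (fst q) (snd q) x + (- l) * R (fst q) l (\<phi> (fst q) (snd q)) x)"
  by (simp add: exit_ell_def fun_eq_iff)

lemma phi_CS: "q \<in> IJ \<Longrightarrow> \<phi> (fst q) (snd q) \<in> CS (S (fst q))"
  using phi_cont IJ_fst IJ_snd by blast

lemma ell_CS: "q \<in> IJ \<Longrightarrow> l > 0 \<Longrightarrow> ell q l \<in> CS (S (fst q))"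
  unfolding ell_eq by (intro CS_lin phi_CS fres.CS_R[OF Rf[OF IJ_fst']])

lemma ell_CSu: "q \<in> IJ \<Longrightarrow> l > 0 \<Longrightarrow> ell q l \<in> CS Su"
  by (rule lift[OF IJ_fst' ell_CS])

lemma ell_nonneg:
  assumes q: "q \<in> IJ" and l: "l > 0"
  shows "0 \<le> ell q l x"
proof (cases "x \<in> S (fst q)")
  case True
  then show ?thesis using phi_excessive[OF IJ_fst[OF q] IJ_snd[OF q] l True]
    by (simp add: exit_ell_def)
next
  case False
  then show ?thesis using CS_zero_out[OF ell_CS[OF q l] False] by simp
qed

lemma ell_hilbert:
  assumes q: "q \<in> IJ" and l: "l > 0" and m: "m > 0"
  shows "ell q m x + (m - l) * R (fst q) l (ell q m) x = ell q l x"
proof -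
  let ?i = "fst q" and ?f = "\<phi> (fst q) (snd q)"
  interpret F: fres "S ?i" "R ?i" by (rule Rf[OF IJ_fst'[OF q]])
  have RmC: "R ?i m ?f \<in> CS (S ?i)" using F.CS_R[OF m phi_CS[OF q]] .
  have "R ?i l (ell q m) = R ?i l (\<lambda>x. 1 * ?f x + (- m) * R ?i m ?f x)"
    by (simp add: ell_eq)
  also have "\<dots> = (\<lambda>x. 1 * R ?i l ?f x + (- m) * R ?i l (R ?i m ?f) x)"
    by (rule F.lin[OF l phi_CS[OF q] RmC])
  finally have e1: "R ?i l (ell q m) x = R ?i l ?f x - m * R ?i l (R ?i m ?f) x" by simp
  have H: "R ?i l ?f x - R ?i m ?f x = (m - l) * R ?i l (R ?i m ?f) x"
    by (rule F.hilbert[OF l m phi_CS[OF q]])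
  define X where "X = R ?i l (R ?i m ?f) x"
  define Y where "Y = R ?i l ?f x"
  define Z where "Z = R ?i m ?f x"
  have H': "Y - Z = (m - l) * X" using H by (simp add: X_def Y_def Z_def)
  have "m * (Y - Z) = m * ((m - l) * X)" using H' by simp
  then have H2: "(m - l) * (m * X) = m * Y - m * Z" by (simp add: algebra_simps)
  have "ell q m x + (m - l) * R ?i l (ell q m) x = ?f x - m * Z + (m - l) * (Y - m * X)"
    using e1 by (simp add: exit_ell_def X_def Y_def Z_def)
  also have "\<dots> = ?f x - m * Z + (m - l) * Y - (m - l) * (m * X)" by (simp add: algebra_simps)
  also have "\<dots> = ?f x - l * Y" using H2 by (simp add: algebra_simps)
  also have "\<dots> = ell q l x" by (simp add: exit_ell_def Y_def)
  finally show ?thesis .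
qed

lemma phi_sum_fun:
  assumes i: "i \<in> IdxM"
  shows "(\<lambda>x. \<Sum>j\<in>{1..\<kappa> i}. 1 * \<phi> i j x) = indicator (S i)"
proof
  fix x show "(\<Sum>j\<in>{1..\<kappa> i}. 1 * \<phi> i j x) = indicator (S i) x"
  proof (cases "x \<in> S i")
    case True then show ?thesis using phi_sum[OF i True] by simp
  next
    case False then show ?thesis using CS_zero_out[OF phi_cont[OF i] False] by simp
  qed
qed

lemma E_eq:
  assumes l: "l > 0"
  shows "(\<Sum>q\<in>IJ. ell q l x) = (\<Sum>i\<in>IdxM. indicator (S i) x - l * R i l (indicator (S i)) x)"
proof -
  have "(\<Sum>q\<in>IJ. ell q l x) = (\<Sum>(i,j)\<in>Sigma IdxM (\<lambda>i. {1..\<kappa> i}). ell (i,j) l x)"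
    by (simp add: IJ_Sigma case_prod_beta')
  also have "\<dots> = (\<Sum>i\<in>IdxM. \<Sum>j\<in>{1..\<kappa> i}. ell (i,j) l x)"
    by (rule sum.Sigma[symmetric]) auto
  also have "\<dots> = (\<Sum>i\<in>IdxM. indicator (S i) x - l * R i l (indicator (S i)) x)"
  proof (rule sum.cong[OF refl])
    fix i assume i: "i \<in> IdxM"
    interpret F: fres "S i" "R i" by (rule Rf[OF IM_sub[OF i]])
    have "(\<Sum>j\<in>{1..\<kappa> i}. ell (i,j) l x) = (\<Sum>j\<in>{1..\<kappa> i}. 1 * \<phi> i j x) - l * (\<Sum>j\<in>{1..\<kappa> i}. 1 * R i l (\<phi> i j) x)"
      by (simp add: exit_ell_def sum_subtractf sum_distrib_left)
    also have "(\<Sum>j\<in>{1..\<kappa> i}. 1 * R i l (\<phi> i j) x) = R i l (\<lambda>x. \<Sum>j\<in>{1..\<kappa> i}. 1 * \<phi> i j x) x"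
      using F.R_sum[OF l, of "{1..\<kappa> i}" "\<phi> i" "\<lambda>_. 1"] phi_cont[OF i] by simp
    finally show "(\<Sum>j\<in>{1..\<kappa> i}. ell (i,j) l x) = indicator (S i) x - l * R i l (indicator (S i)) x"
      unfolding phi_sum_fun[OF i] by (metis (no_types) phi_sum_fun[OF i])
  qed
  finally show ?thesis .
qed

lemma E_on_M:
  assumes l: "l > 0" and k: "k \<in> IdxM" and x: "x \<in> S k"
  shows "(\<Sum>q\<in>IJ. ell q l x) = 1 - l * R k l (indicator (S k)) x"
  unfolding E_eq[OF l]
proof (subst sum_single[where i=k])
  fix i assume i: "i \<in> IdxM" "i \<noteq> k"
  have xi: "x \<notin> S i" using S_notin[OF IM_sub[OF k] IM_sub[OF i(1)]] i(2) x by blast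
  show "indicator (S i) x - l * R i l (indicator (S i)) x = 0"
    using fres.zero_out[OF Rf[OF IM_sub[OF i(1)]] l CS_indicator xi] xi by simp
qed (use k x in auto)

lemma E_off:
  assumes l: "l > 0" and x: "\<And>k. k \<in> IdxM \<Longrightarrow> x \<notin> S k"
  shows "(\<Sum>q\<in>IJ. ell q l x) = 0"
  unfolding E_eq[OF l]
proof (rule sum.neutral, rule ballI)
  fix i assume i: "i \<in> IdxM"
  show "indicator (S i) x - l * R i l (indicator (S i)) x = 0"
    using fres.zero_out[OF Rf[OF IM_sub[OF i]] l CS_indicator x[OF i]] x[OF i] by simp
qed

lemma ind_Su_CS: "indicator Su \<in> CS Su" by simp

lemma ind_restr: "i \<in> Idx \<Longrightarrow> (\<lambda>y. indicator Su y * indicator (S i) y) = (indicator (S i) :: _ \<Rightarrow> real)"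
  using S_sub by (auto simp: indicator_def fun_eq_iff)

lemma E_plus:
  assumes l: "l > 0"
  shows "(\<Sum>q\<in>IJ. ell q l x) + l * Rd l (indicator Su) x = indicator Su x"
proof (cases "x \<in> Su")
  case True
  then obtain k where k: "k \<in> Idx" "x \<in> S k" unfolding Su_eq by auto
  have Rdx: "Rd l (indicator Su) x = R k l (indicator (S k)) x"
    using Rd_on[OF l ind_Su_CS k] ind_restr[OF k(1)] by simp
  show ?thesis
  proof (cases "k \<in> IdxM")
    case True
    then show ?thesis using E_on_M[OF l True k(2)] Rdx \<open>x \<in> Su\<close> by simp
  next
    case False
    then have kc: "k \<in> {M+1..Nn}" using k(1) by auto
    have "l * R k l (indicator (S k)) x = 1"
      using conservative[OF kc] l k(2) unfolding conservative_resolvent_def by blast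
    moreover have "(\<Sum>q\<in>IJ. ell q l x) = 0"
    proof (rule E_off[OF l])
      fix i assume i: "i \<in> IdxM"
      then have "i \<noteq> k" using False by auto
      then show "x \<notin> S i" using S_notin[OF k(1) IM_sub[OF i]] k(2) by blast
    qed
    ultimately show ?thesis using Rdx \<open>x \<in> Su\<close> by simp
  qed
next
  case False
  have "(\<Sum>q\<in>IJ. ell q l x) = 0"
    by (rule E_off[OF l]) (use False S_sub IM_sub in blast)
  then show ?thesis using Rd_out[OF l ind_Su_CS False] False by simp
qed


lemma space_p: "q \<in> IJ \<Longrightarrow> space (p q) = Su"
  using sets_eq_imp_space_eq[OF p_sets] by (simp add: space_restrict_space)

lemma fm: "q \<in> IJ \<Longrightarrow> finite_measure (p q)"
  using p_subprob unfolding subprob_space_def by blast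

lemma meas_CS:
  assumes q: "q \<in> IJ" and g: "g \<in> CS Su"
  shows "g \<in> borel_measurable (p q)"
proof -
  have "g \<in> borel_measurable (restrict_space borel Su)"
    by (rule borel_measurable_continuous_on_restrict[OF CS_cont[OF g]])
  moreover have "borel_measurable (p q) = (borel_measurable (restrict_space borel Su) :: ('a \<Rightarrow> real) set)"
    by (rule measurable_cong_sets[OF p_sets[OF q] refl])
  ultimately show ?thesis by (simp only:)
qed

lemma bnd_CS:
  assumes g: "g \<in> CS Su"
  shows "\<exists>K\<ge>0. \<forall>x\<in>Su. \<bar>g x\<bar> \<le> K"
proof -
  have "compact (g ` Su)" by (rule compact_continuous_image[OF CS_cont[OF g] compact_Su])
  then have "bounded (g ` Su)" by (rule compact_imp_bounded)
  then obtain K where K: "\<forall>y\<in>g ` Su. norm y \<le> K" by (auto simp: bounded_iff)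
  show ?thesis
  proof (intro exI[of _ "max K 0"] conjI ballI)
    fix x assume "x \<in> Su" then show "\<bar>g x\<bar> \<le> max K 0" using K by force
  qed simp
qed

lemma integrable_CS:
  assumes q: "q \<in> IJ" and g: "g \<in> CS Su"
  shows "integrable (p q) g"
proof -
  obtain K where K: "\<forall>x\<in>Su. \<bar>g x\<bar> \<le> K" using bnd_CS[OF g] by blast
  show ?thesis
  proof (rule finite_measure.integrable_const_bound[OF fm[OF q], where B=K])
    show "AE x in p q. norm (g x) \<le> K" using K space_p[OF q] by (intro AE_I2) auto
    show "g \<in> borel_measurable (p q)" by (rule meas_CS[OF q g])
  qed
qed

lemma int_le:
  fixes g :: "'a \<Rightarrow> real"
  assumes q: "q \<in> IJ" and g: "integrable (p q) g" and le: "\<And>x. x \<in> Su \<Longrightarrow> g x \<le> c" and c: "0 \<le> c"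
  shows "integral\<^sup>L (p q) g \<le> c"
proof -
  interpret P: subprob_space "p q" by (rule p_subprob[OF q])
  have "integral\<^sup>L (p q) g \<le> integral\<^sup>L (p q) (\<lambda>x. c)"
    by (rule Bochner_Integration.integral_mono[OF g]) (auto simp: space_p[OF q] le)
  also have "\<dots> = measure (p q) (space (p q)) * c" by simp
  also have "\<dots> \<le> c" using P.subprob_measure_le_1 c by (simp add: mult_left_le_one_le)
  finally show ?thesis .
qed

lemma int_nonneg:
  fixes g :: "'a \<Rightarrow> real"
  assumes q: "q \<in> IJ" and le: "\<And>x. x \<in> Su \<Longrightarrow> 0 \<le> g x"
  shows "0 \<le> integral\<^sup>L (p q) g"
  by (intro integral_nonneg_AE AE_I2) (use le space_p[OF q] in auto)

lemma int_abs:
  fixes g :: "'a \<Rightarrow> real"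
  assumes q: "q \<in> IJ" and g: "integrable (p q) g" and le: "\<And>x. x \<in> Su \<Longrightarrow> \<bar>g x\<bar> \<le> K" and K: "0 \<le> K"
  shows "\<bar>integral\<^sup>L (p q) g\<bar> \<le> K"
proof -
  have "\<And>x. x \<in> Su \<Longrightarrow> g x \<le> K" using le abs_le_D1 by blast
  then have "integral\<^sup>L (p q) g \<le> K" using int_le[OF q g _ K] by blast
  moreover have "integral\<^sup>L (p q) (\<lambda>x. - g x) \<le> K"
    using int_le[OF q _ _ K, of "\<lambda>x. - g x"] g le by (simp add: abs_le_iff)
  ultimately show ?thesis by simp
qed

lemma N_eq:
  assumes q: "q \<in> IJ" and r: "r \<in> IJ" and l: "l > 0"
  shows "Nm l q r = integral\<^sup>L (p q) (ell r l)"
  unfolding N_mat_def set_lebesgue_integral_def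
proof (rule Bochner_Integration.integral_cong[OF refl])
  fix x show "indicator (S (fst r)) x *\<^sub>R ell r l x = ell r l x"
    using CS_zero_out[OF ell_CS[OF r l]] by (cases "x \<in> S (fst r)") auto
qed

lemma N_nonneg: "q \<in> IJ \<Longrightarrow> r \<in> IJ \<Longrightarrow> l > 0 \<Longrightarrow> 0 \<le> Nm l q r"
  unfolding N_eq by (intro int_nonneg ell_nonneg)

lemma E_CS: "l > 0 \<Longrightarrow> (\<lambda>x. \<Sum>r\<in>IJ. ell r l x) \<in> CS Su"
  by (intro CS_sum1 fin_IJ ell_CSu)

lemma rowsum:
  assumes q: "q \<in> IJ" and l: "l > 0"
  shows "(\<Sum>r\<in>IJ. Nm l q r) = integral\<^sup>L (p q) (\<lambda>x. \<Sum>r\<in>IJ. ell r l x)"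
proof -
  have "(\<Sum>r\<in>IJ. Nm l q r) = (\<Sum>r\<in>IJ. integral\<^sup>L (p q) (ell r l))"
    by (rule sum.cong[OF refl]) (simp add: N_eq[OF q _ l])
  also have "\<dots> = integral\<^sup>L (p q) (\<lambda>x. \<Sum>r\<in>IJ. ell r l x)"
    by (rule Bochner_Integration.integral_sum[symmetric]) (rule integrable_CS[OF q ell_CSu[OF _ l]])
  finally show ?thesis .
qed

lemma E_le:
  assumes l: "l > 0" and c: "0 \<le> c"
    and ci: "\<And>k x. k \<in> IdxM \<Longrightarrow> x \<in> S k \<Longrightarrow> 1 - l * R k l (indicator (S k)) x \<le> c"
  shows "(\<Sum>q\<in>IJ. ell q l x) \<le> c"
proof (cases "\<exists>k\<in>IdxM. x \<in> S k")
  case True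
  then obtain k where k: "k \<in> IdxM" "x \<in> S k" by blast
  then show ?thesis using E_on_M[OF l k] ci[OF k] by simp
next
  case False
  then have "(\<Sum>q\<in>IJ. ell q l x) = 0" by (intro E_off[OF l]) blast
  then show ?thesis using c by simp
qed

lemma lsysI:
  assumes l: "l > 0" and c: "0 \<le> c" "c < 1"
    and ci: "\<And>k x. k \<in> IdxM \<Longrightarrow> x \<in> S k \<Longrightarrow> 1 - l * R k l (indicator (S k)) x \<le> c"
  shows "lsys IJ (Nm l) c"
proof -
  have A1: "\<And>q r. q \<in> IJ \<Longrightarrow> r \<in> IJ \<Longrightarrow> 0 \<le> Nm l q r" using N_nonneg l by blast
  have A2: "(\<Sum>r\<in>IJ. Nm l q r) \<le> c" if q: "q \<in> IJ" for q
    unfolding rowsum[OF q l]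
    by (rule int_le[OF q integrable_CS[OF q E_CS[OF l]] _ c(1)]) (rule E_le[OF l c(1) ci])
  show ?thesis unfolding lsys_def using fin_IJ A1 A2 c(2) by blast
qed

lemma lsys_l:
  assumes l: "l > 0"
  shows "\<exists>c. lsys IJ (Nm l) c"
proof -
  have "\<forall>k\<in>IdxM. \<exists>c<1. \<forall>x\<in>S k. 1 - l * R k l (indicator (S k)) x \<le> c"
    using fres.row_bound[OF Rf[OF IM_sub] S_compact[OF IM_sub] l] by blast
  then obtain cf where cf: "\<And>k. k \<in> IdxM \<Longrightarrow> cf k < 1 \<and> (\<forall>x\<in>S k. 1 - l * R k l (indicator (S k)) x \<le> cf k)"
    by metis
  define c where "c = Max (insert 0 (cf ` IdxM))"
  have c0: "0 \<le> c" unfolding c_def by (rule Max_ge) auto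
  have c1: "c < 1" unfolding c_def using cf by (subst Max_less_iff) auto
  have cfc: "cf k \<le> c" if "k \<in> IdxM" for k unfolding c_def using that by (intro Max_ge) auto
  have ci: "1 - l * R k l (indicator (S k)) x \<le> c" if k: "k \<in> IdxM" and x: "x \<in> S k" for k x
  proof -
    have "1 - l * R k l (indicator (S k)) x \<le> cf k" using cf[OF k] x by blast
    then show ?thesis using cfc[OF k] by linarith
  qed
  show ?thesis using lsysI[OF l c0 c1 ci] by blast
qed

lemma lsys_ev: "\<forall>\<^sub>F l in at_top. l > 0 \<and> lsys IJ (Nm l) (1/2)"
proof -
  have "\<forall>k\<in>IdxM. \<forall>\<^sub>F l in at_top. \<forall>x\<in>S k. dist (l * R k l (indicator (S k)) x) (indicator (S k) x) < 1/2"
  proof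
    fix k assume k: "k \<in> IdxM"
    show "\<forall>\<^sub>F l in at_top. \<forall>x\<in>S k. dist (l * R k l (indicator (S k)) x) (indicator (S k) x) < 1/2"
      by (rule uniform_limitD[OF fres.ulim[OF Rf[OF IM_sub[OF k]] CS_indicator], of "1/2"]) simp
  qed
  then have "\<forall>\<^sub>F l in at_top. \<forall>k\<in>IdxM. \<forall>x\<in>S k. dist (l * R k l (indicator (S k)) x) (indicator (S k) x) < 1/2"
    by (rule eventually_ball_finite[rotated]) simp
  moreover have "\<forall>\<^sub>F l in at_top. (l::real) > 0" by (rule eventually_gt_at_top)
  ultimately show ?thesis
  proof eventually_elim
    case (elim l)
    show ?case
    proof (intro conjI lsysI)
      fix k x assume k: "k \<in> IdxM" and x: "x \<in> S k"
      have "dist (l * R k l (indicator (S k)) x) (indicator (S k) x) < 1/2" using elim(1) k x by blast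
      then have "\<bar>l * R k l (indicator (S k)) x - 1\<bar> < 1/2" using x by (simp add: dist_real_def)
      then show "1 - l * R k l (indicator (S k)) x \<le> 1/2" by linarith
    qed (use elim in auto)
  qed
qed

lemma u_prop:
  assumes "lsys IJ (Nm l) c"
  shows "(\<forall>q. q \<notin> IJ \<longrightarrow> uc l f q = 0) \<and> (\<forall>q\<in>IJ. uc l f q - (\<Sum>r\<in>IJ. Nm l q r * uc l f r) = bv l f q)"
  unfolding u_coef_def by (rule theI'[OF lsys.ex1[OF assms]])

lemma u_eqI:
  assumes "lsys IJ (Nm l) c" "\<forall>q. q \<notin> IJ \<longrightarrow> w q = 0" "\<forall>q\<in>IJ. w q - (\<Sum>r\<in>IJ. Nm l q r * w r) = bv l f q"
  shows "uc l f = w"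
  unfolding u_coef_def by (rule the1_equality[OF lsys.ex1[OF assms(1)]]) (use assms(2,3) in blast)

end

lemma sl1: fixes A x y :: "'b \<Rightarrow> real"
  shows "(\<Sum>r\<in>J. A r * (x r + b * y r)) = (\<Sum>r\<in>J. A r * x r) + b * (\<Sum>r\<in>J. A r * y r)"
  by (simp add: sum.distrib sum_distrib_left algebra_simps)
lemma sl2: fixes A B x :: "'b \<Rightarrow> real"
  shows "(\<Sum>r\<in>J. x r * (A r - B r)) = (\<Sum>r\<in>J. A r * x r) - (\<Sum>r\<in>J. B r * x r)"
  by (simp add: sum_subtractf algebra_simps)
lemma sl3: fixes a x y :: "'b \<Rightarrow> real"
  shows "(\<Sum>r\<in>J. (x r + b * y r) * a r) = (\<Sum>r\<in>J. x r * a r) + b * (\<Sum>r\<in>J. y r * a r)"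
  by (simp add: sum.distrib sum_distrib_left algebra_simps)
lemma sl4: fixes a c x :: "'b \<Rightarrow> real"
  shows "(\<Sum>r\<in>J. x r * (a r - c r)) = (\<Sum>r\<in>J. x r * a r) - (\<Sum>r\<in>J. x r * c r)"
  by (simp add: sum_subtractf algebra_simps)

context main begin

abbreviation "fr f i \<equiv> (\<lambda>y. f y * indicator (S i) y)"

lemma Rc_eq: "Rc l f = (\<lambda>x. Rd l f x + (\<Sum>q\<in>IJ. uc l f q * ell q l x))"
  by (simp add: R_co_def)

lemma Rc_CS:
  assumes l: "l > 0" and f: "f \<in> CS Su"
  shows "Rc l f \<in> CS Su"
proof -
  have "(\<lambda>x. \<Sum>q\<in>IJ. uc l f q * ell q l x) \<in> CS Su"
    by (intro CS_sum fin_IJ ell_CSu l)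
  from CS_lin[OF Rd_CS[OF l f] this, of 1 1] show ?thesis by (simp add: Rc_eq)
qed

lemma Rd_lin:
  assumes l: "l > 0" and f: "f \<in> CS Su" and g: "g \<in> CS Su"
  shows "Rd l (\<lambda>x. a * f x + b * g x) = (\<lambda>x. a * Rd l f x + b * Rd l g x)"
proof
  fix x
  have "Rd l (\<lambda>x. a * f x + b * g x) x = (\<Sum>i\<in>Idx. a * R i l (fr f i) x + b * R i l (fr g i) x)"
    unfolding Rd_eq
  proof (rule sum.cong[OF refl])
    fix i assume i: "i \<in> Idx"
    have "(\<lambda>y. (a * f y + b * g y) * indicator (S i) y) = (\<lambda>y. a * fr f i y + b * fr g i y)"
      by (simp add: algebra_simps)
    then show "R i l (\<lambda>y. (a * f y + b * g y) * indicator (S i) y) x = a * R i l (fr f i) x + b * R i l (fr g i) x"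
      using fres.lin[OF Rf[OF i] l restr[OF i f] restr[OF i g], of a b] by simp
  qed
  also have "\<dots> = a * Rd l f x + b * Rd l g x"
    unfolding Rd_eq by (simp add: sum.distrib sum_distrib_left)
  finally show "Rd l (\<lambda>x. a * f x + b * g x) x = a * Rd l f x + b * Rd l g x" .
qed

lemma int_Rd: "q \<in> IJ \<Longrightarrow> l > 0 \<Longrightarrow> f \<in> CS Su \<Longrightarrow> integrable (p q) (Rd l f)"
  by (rule integrable_CS[OF _ Rd_CS])

lemma int_ell: "q \<in> IJ \<Longrightarrow> r \<in> IJ \<Longrightarrow> l > 0 \<Longrightarrow> integrable (p q) (ell r l)"
  by (rule integrable_CS[OF _ ell_CSu])

lemma bv_lin:
  assumes q: "q \<in> IJ" and l: "l > 0" and f: "f \<in> CS Su" and g: "g \<in> CS Su"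
  shows "bv l (\<lambda>x. a * f x + b * g x) q = a * bv l f q + b * bv l g q"
  unfolding Rd_lin[OF l f g]
  using int_Rd[OF q l f] int_Rd[OF q l g] by simp

lemma sum_lin:
  fixes A x y :: "'b \<Rightarrow> real"
  shows "(\<Sum>r\<in>J. A r * (a * x r + b * y r)) = a * (\<Sum>r\<in>J. A r * x r) + b * (\<Sum>r\<in>J. A r * y r)"
  by (simp add: sum.distrib sum_distrib_left algebra_simps)

lemma u_lin:
  assumes l: "l > 0" and f: "f \<in> CS Su" and g: "g \<in> CS Su"
  shows "uc l (\<lambda>x. a * f x + b * g x) = (\<lambda>q. a * uc l f q + b * uc l g q)"
proof -
  obtain c where c: "lsys IJ (Nm l) c" using lsys_l[OF l] by blast
  note uf = u_prop[OF c, of f] and ug = u_prop[OF c, of g]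
  show ?thesis
  proof (rule u_eqI[OF c])
    show "\<forall>q. q \<notin> IJ \<longrightarrow> a * uc l f q + b * uc l g q = 0" using uf ug by simp
    show "\<forall>q\<in>IJ. a * uc l f q + b * uc l g q - (\<Sum>r\<in>IJ. Nm l q r * (a * uc l f r + b * uc l g r)) =
        bv l (\<lambda>x. a * f x + b * g x) q"
    proof
      fix q assume q: "q \<in> IJ"
      have "a * uc l f q + b * uc l g q - (\<Sum>r\<in>IJ. Nm l q r * (a * uc l f r + b * uc l g r))
          = a * (uc l f q - (\<Sum>r\<in>IJ. Nm l q r * uc l f r)) + b * (uc l g q - (\<Sum>r\<in>IJ. Nm l q r * uc l g r))"
        unfolding sum_lin by (simp add: algebra_simps)
      also have "\<dots> = a * bv l f q + b * bv l g q" using uf ug q by simp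
      also have "\<dots> = bv l (\<lambda>x. a * f x + b * g x) q" by (rule bv_lin[OF q l f g, symmetric])
      finally show "a * uc l f q + b * uc l g q - (\<Sum>r\<in>IJ. Nm l q r * (a * uc l f r + b * uc l g r)) =
        bv l (\<lambda>x. a * f x + b * g x) q" .
    qed
  qed
qed

lemma Rc_lin:
  assumes l: "l > 0" and f: "f \<in> CS Su" and g: "g \<in> CS Su"
  shows "Rc l (\<lambda>x. a * f x + b * g x) = (\<lambda>x. a * Rc l f x + b * Rc l g x)"
proof
  fix x
  show "Rc l (\<lambda>x. a * f x + b * g x) x = a * Rc l f x + b * Rc l g x"
    unfolding Rc_eq Rd_lin[OF l f g] u_lin[OF l f g]
    by (simp add: sum_distrib_left sum.distrib algebra_simps)
qed


lemma h_eq: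
  assumes q: "q \<in> IJ" and i: "i \<in> Idx" and m: "m > 0"
  shows "(\<lambda>y. ell q m y * indicator (S i) y) = (if fst q = i then ell q m else (\<lambda>y. 0))"
proof (cases "fst q = i")
  case True
  have "ell q m y * indicator (S i) y = ell q m y" for y
    using CS_zero_out[OF ell_CS[OF q m], of y] True by (cases "y \<in> S i") auto
  then show ?thesis using True by auto
next
  case False
  have "ell q m y * indicator (S i) y = 0" for y
  proof (cases "y \<in> S i")
    case True
    then have "y \<notin> S (fst q)" using S_notin[OF i IJ_fst'[OF q]] False by metis
    then show ?thesis using CS_zero_out[OF ell_CS[OF q m]] by simp
  qed simp
  then show ?thesis using False by auto
qed

lemma h_CS: "q \<in> IJ \<Longrightarrow> i \<in> Idx \<Longrightarrow> m > 0 \<Longrightarrow> (\<lambda>y. ell q m y * indicator (S i) y) \<in> CS (S i)"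
  unfolding h_eq using ell_CS by auto

lemma Rd_restr:
  assumes m: "m > 0" and f: "f \<in> CS Su" and i: "i \<in> Idx"
  shows "Rd m f y * indicator (S i) y = R i m (fr f i) y"
proof (cases "y \<in> S i")
  case True then show ?thesis using Rd_on[OF m f i True] by simp
next
  case False then show ?thesis using fres.zero_out[OF Rf[OF i] m restr[OF i f] False] by simp
qed

lemma Rc_restr:
  assumes m: "m > 0" and f: "f \<in> CS Su" and i: "i \<in> Idx"
  shows "fr (Rc m f) i = (\<lambda>y. 1 * R i m (fr f i) y + 1 * (\<Sum>q\<in>IJ. uc m f q * (ell q m y * indicator (S i) y)))"
proof
  fix y
  have "Rc m f y * indicator (S i) y = Rd m f y * indicator (S i) y + (\<Sum>q\<in>IJ. uc m f q * (ell q m y * indicator (S i) y))"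
    unfolding Rc_eq by (simp add: algebra_simps sum_distrib_right sum_distrib_left)
  then show "Rc m f y * indicator (S i) y = 1 * R i m (fr f i) y + 1 * (\<Sum>q\<in>IJ. uc m f q * (ell q m y * indicator (S i) y))"
    using Rd_restr[OF m f i] by simp
qed

lemma Rd_Rc:
  assumes l: "l > 0" and m: "m > 0" and f: "f \<in> CS Su"
  shows "Rd l (Rc m f) x = (\<Sum>i\<in>Idx. R i l (R i m (fr f i)) x) + (\<Sum>q\<in>IJ. uc m f q * R (fst q) l (ell q m) x)"
proof -
  have per_i: "R i l (fr (Rc m f) i) x = R i l (R i m (fr f i)) x
      + (\<Sum>q\<in>IJ. (if fst q = i then uc m f q * R i l (ell q m) x else 0))" if i: "i \<in> Idx" for i
  proof -
    interpret F: fres "S i" "R i" by (rule Rf[OF i])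
    have C1: "R i m (fr f i) \<in> CS (S i)" by (rule F.CS_R[OF m restr[OF i f]])
    have C2: "(\<lambda>y. \<Sum>q\<in>IJ. uc m f q * (ell q m y * indicator (S i) y)) \<in> CS (S i)"
      by (intro CS_sum fin_IJ h_CS i m)
    have "R i l (fr (Rc m f) i) = (\<lambda>y. 1 * R i l (R i m (fr f i)) y + 1 * R i l (\<lambda>y. \<Sum>q\<in>IJ. uc m f q * (ell q m y * indicator (S i) y)) y)"
      unfolding Rc_restr[OF m f i] by (rule F.lin[OF l C1 C2])
    also have "R i l (\<lambda>y. \<Sum>q\<in>IJ. uc m f q * (ell q m y * indicator (S i) y))
        = (\<lambda>y. \<Sum>q\<in>IJ. uc m f q * R i l (\<lambda>y. ell q m y * indicator (S i) y) y)"
      by (rule F.R_sum[OF l fin_IJ h_CS[OF _ i m]])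
    finally have e: "R i l (fr (Rc m f) i) x = R i l (R i m (fr f i)) x + (\<Sum>q\<in>IJ. uc m f q * R i l (\<lambda>y. ell q m y * indicator (S i) y) x)"
      by simp
    have "uc m f q * R i l (\<lambda>y. ell q m y * indicator (S i) y) x = (if fst q = i then uc m f q * R i l (ell q m) x else 0)"
      if q: "q \<in> IJ" for q
      unfolding h_eq[OF q i m] using F.R_zero[OF l] by simp
    then show ?thesis using e by simp
  qed
  have "Rd l (Rc m f) x = (\<Sum>i\<in>Idx. R i l (fr (Rc m f) i) x)" by (simp add: Rd_eq)
  also have "\<dots> = (\<Sum>i\<in>Idx. R i l (R i m (fr f i)) x) + (\<Sum>i\<in>Idx. \<Sum>q\<in>IJ. (if fst q = i then uc m f q * R i l (ell q m) x else 0))"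
    by (simp add: per_i sum.distrib)
  also have "(\<Sum>i\<in>Idx. \<Sum>q\<in>IJ. (if fst q = i then uc m f q * R i l (ell q m) x else 0))
      = (\<Sum>q\<in>IJ. \<Sum>i\<in>Idx. (if fst q = i then uc m f q * R i l (ell q m) x else 0))"
    by (rule sum.swap)
  also have "\<dots> = (\<Sum>q\<in>IJ. uc m f q * R (fst q) l (ell q m) x)"
  proof (rule sum.cong[OF refl])
    fix q assume q: "q \<in> IJ"
    show "(\<Sum>i\<in>Idx. (if fst q = i then uc m f q * R i l (ell q m) x else 0)) = uc m f q * R (fst q) l (ell q m) x"
      by (subst sum_single[where i="fst q"]) (use IJ_fst'[OF q] in auto)
  qed
  finally show ?thesis .
qed

lemma K1:
  assumes l: "l > 0" and m: "m > 0" and f: "f \<in> CS Su"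
  shows "(m - l) * Rd l (Rc m f) x = Rd l f x - Rd m f x + (\<Sum>q\<in>IJ. uc m f q * (ell q l x - ell q m x))"
proof -
  have A: "(m - l) * (\<Sum>i\<in>Idx. R i l (R i m (fr f i)) x) = Rd l f x - Rd m f x"
  proof -
    have "(m - l) * (\<Sum>i\<in>Idx. R i l (R i m (fr f i)) x) = (\<Sum>i\<in>Idx. R i l (fr f i) x - R i m (fr f i) x)"
      unfolding sum_distrib_left
    proof (rule sum.cong[OF refl])
      fix i assume i: "i \<in> Idx"
      show "(m - l) * R i l (R i m (fr f i)) x = R i l (fr f i) x - R i m (fr f i) x"
        using fres.hilbert[OF Rf[OF i] l m restr[OF i f], of x] by simp
    qed
    also have "\<dots> = Rd l f x - Rd m f x" by (simp add: Rd_eq sum_subtractf)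
    finally show ?thesis .
  qed
  have B: "(m - l) * (\<Sum>q\<in>IJ. uc m f q * R (fst q) l (ell q m) x) = (\<Sum>q\<in>IJ. uc m f q * (ell q l x - ell q m x))"
    unfolding sum_distrib_left
  proof (rule sum.cong[OF refl])
    fix q assume q: "q \<in> IJ"
    have "(m - l) * R (fst q) l (ell q m) x = ell q l x - ell q m x"
      using ell_hilbert[OF q l m, of x] by simp
    then show "(m - l) * (uc m f q * R (fst q) l (ell q m) x) = uc m f q * (ell q l x - ell q m x)"
      by (metis mult.left_commute)
  qed
  show ?thesis unfolding Rd_Rc[OF l m f] distrib_left A B ..
qed

lemma K2:
  assumes l: "l > 0" and m: "m > 0" and f: "f \<in> CS Su"
  shows "uc l f = (\<lambda>q. uc m f q + (m - l) * uc l (Rc m f) q)"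
proof -
  obtain c where c: "lsys IJ (Nm l) c" using lsys_l[OF l] by blast
  obtain c' where c': "lsys IJ (Nm m) c'" using lsys_l[OF m] by blast
  define g where "g = Rc m f"
  have g: "g \<in> CS Su" unfolding g_def by (rule Rc_CS[OF m f])
  note u1 = u_prop[OF c', of f] and u2 = u_prop[OF c, of g]
  show ?thesis unfolding g_def[symmetric]
  proof (rule u_eqI[OF c])
    show "\<forall>q. q \<notin> IJ \<longrightarrow> uc m f q + (m - l) * uc l g q = 0" using u1 u2 by simp
    show "\<forall>q\<in>IJ. uc m f q + (m - l) * uc l g q - (\<Sum>r\<in>IJ. Nm l q r * (uc m f r + (m - l) * uc l g r)) = bv l f q"
    proof
      fix q assume q: "q \<in> IJ"
      have I1: "(m - l) * bv l g q = bv l f q - bv m f q + (\<Sum>r\<in>IJ. uc m f r * (Nm l q r - Nm m q r))"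
      proof -
        have "(m - l) * bv l g q = integral\<^sup>L (p q) (\<lambda>x. (m - l) * Rd l g x)" by simp
        also have "\<dots> = integral\<^sup>L (p q) (\<lambda>x. Rd l f x - Rd m f x + (\<Sum>r\<in>IJ. uc m f r * (ell r l x - ell r m x)))"
          unfolding g_def K1[OF l m f] ..
        also have "\<dots> = bv l f q - bv m f q + (\<Sum>r\<in>IJ. uc m f r * (integral\<^sup>L (p q) (ell r l) - integral\<^sup>L (p q) (ell r m)))"
        proof -
          let ?w = "uc m f"
          have i1: "integrable (p q) (\<lambda>x. Rd l f x - Rd m f x)"
            by (rule Bochner_Integration.integrable_diff[OF int_Rd[OF q l f] int_Rd[OF q m f]])
          have i2: "integrable (p q) (\<lambda>x. ?w r * (ell r l x - ell r m x))" if r: "r \<in> IJ" for r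
            by (intro Bochner_Integration.integrable_mult_right Bochner_Integration.integrable_diff int_ell[OF q r l] int_ell[OF q r m])
          have i3: "integrable (p q) (\<lambda>x. \<Sum>r\<in>IJ. ?w r * (ell r l x - ell r m x))"
            by (rule Bochner_Integration.integrable_sum) (rule i2)
          have "integral\<^sup>L (p q) (\<lambda>x. Rd l f x - Rd m f x + (\<Sum>r\<in>IJ. ?w r * (ell r l x - ell r m x)))
             = integral\<^sup>L (p q) (\<lambda>x. Rd l f x - Rd m f x) + integral\<^sup>L (p q) (\<lambda>x. \<Sum>r\<in>IJ. ?w r * (ell r l x - ell r m x))"
            by (rule Bochner_Integration.integral_add[OF i1 i3])
          also have "integral\<^sup>L (p q) (\<lambda>x. Rd l f x - Rd m f x) = bv l f q - bv m f q"
            by (rule Bochner_Integration.integral_diff[OF int_Rd[OF q l f] int_Rd[OF q m f]])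
          also have "integral\<^sup>L (p q) (\<lambda>x. \<Sum>r\<in>IJ. ?w r * (ell r l x - ell r m x))
             = (\<Sum>r\<in>IJ. integral\<^sup>L (p q) (\<lambda>x. ?w r * (ell r l x - ell r m x)))"
            by (rule Bochner_Integration.integral_sum) (rule i2)
          also have "\<dots> = (\<Sum>r\<in>IJ. ?w r * (integral\<^sup>L (p q) (ell r l) - integral\<^sup>L (p q) (ell r m)))"
          proof (rule sum.cong[OF refl])
            fix r assume r: "r \<in> IJ"
            have "integral\<^sup>L (p q) (\<lambda>x. ?w r * (ell r l x - ell r m x)) = ?w r * integral\<^sup>L (p q) (\<lambda>x. ell r l x - ell r m x)"
              by (rule integral_mult_right_zero)
            also have "integral\<^sup>L (p q) (\<lambda>x. ell r l x - ell r m x) = integral\<^sup>L (p q) (ell r l) - integral\<^sup>L (p q) (ell r m)"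
              by (rule Bochner_Integration.integral_diff[OF int_ell[OF q r l] int_ell[OF q r m]])
            finally show "integral\<^sup>L (p q) (\<lambda>x. ?w r * (ell r l x - ell r m x)) = ?w r * (integral\<^sup>L (p q) (ell r l) - integral\<^sup>L (p q) (ell r m))" .
          qed
          finally show ?thesis .
        qed
        also have "\<dots> = bv l f q - bv m f q + (\<Sum>r\<in>IJ. uc m f r * (Nm l q r - Nm m q r))"
          using N_eq[OF q _ l] N_eq[OF q _ m] by simp
        finally show ?thesis .
      qed
      have E1: "uc m f q - (\<Sum>r\<in>IJ. Nm m q r * uc m f r) = bv m f q" using u1 q by simp
      have E2: "uc l g q - (\<Sum>r\<in>IJ. Nm l q r * uc l g r) = bv l g q" using u2 q by simp
      have "uc m f q + (m - l) * uc l g q - (\<Sum>r\<in>IJ. Nm l q r * (uc m f r + (m - l) * uc l g r))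
         = (uc m f q - (\<Sum>r\<in>IJ. Nm m q r * uc m f r)) + (\<Sum>r\<in>IJ. uc m f r * (Nm m q r - Nm l q r))
           + (m - l) * (uc l g q - (\<Sum>r\<in>IJ. Nm l q r * uc l g r))"
        unfolding sl1 sl2 by (simp add: algebra_simps)
      also have "\<dots> = bv m f q + (\<Sum>r\<in>IJ. uc m f r * (Nm m q r - Nm l q r)) + (m - l) * bv l g q"
        using E1 E2 by simp
      also have "\<dots> = bv l f q + ((\<Sum>r\<in>IJ. uc m f r * (Nm m q r - Nm l q r)) + (\<Sum>r\<in>IJ. uc m f r * (Nm l q r - Nm m q r)))"
        unfolding I1 by simp
      also have "(\<Sum>r\<in>IJ. uc m f r * (Nm m q r - Nm l q r)) + (\<Sum>r\<in>IJ. uc m f r * (Nm l q r - Nm m q r)) = 0"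
        unfolding sl2 by simp
      finally show "uc m f q + (m - l) * uc l g q - (\<Sum>r\<in>IJ. Nm l q r * (uc m f r + (m - l) * uc l g r)) = bv l f q"
        by simp
    qed
  qed
qed

lemma Rc_hilbert:
  assumes l: "l > 0" and m: "m > 0" and f: "f \<in> CS Su"
  shows "Rc l f x - Rc m f x = (m - l) * Rc l (Rc m f) x"
proof -
  define g where "g = Rc m f"
  define w1 where "w1 = uc m f"
  define w2 where "w2 = uc l g"
  have e1: "Rc l g x = Rd l g x + (\<Sum>q\<in>IJ. w2 q * ell q l x)" unfolding w2_def by (simp only: Rc_eq)
  have e2: "Rc l f x = Rd l f x + (\<Sum>q\<in>IJ. uc l f q * ell q l x)" by (simp only: Rc_eq)
  have e3: "Rc m f x = Rd m f x + (\<Sum>q\<in>IJ. w1 q * ell q m x)" unfolding w1_def by (simp only: Rc_eq)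
  have k1: "(m - l) * Rd l g x = Rd l f x - Rd m f x + (\<Sum>q\<in>IJ. w1 q * (ell q l x - ell q m x))"
    unfolding g_def w1_def by (rule K1[OF l m f])
  have k2: "uc l f = (\<lambda>q. w1 q + (m - l) * w2 q)"
    unfolding w1_def w2_def g_def by (rule K2[OF l m f])
  have s1: "(\<Sum>q\<in>IJ. uc l f q * ell q l x) = (\<Sum>q\<in>IJ. w1 q * ell q l x) + (m - l) * (\<Sum>q\<in>IJ. w2 q * ell q l x)"
    unfolding k2 by (rule sl3)
  have s2: "(\<Sum>q\<in>IJ. w1 q * (ell q l x - ell q m x)) = (\<Sum>q\<in>IJ. w1 q * ell q l x) - (\<Sum>q\<in>IJ. w1 q * ell q m x)"
    by (rule sl4)
  have "(m - l) * Rc l g x = (m - l) * Rd l g x + (m - l) * (\<Sum>q\<in>IJ. w2 q * ell q l x)"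
    unfolding e1 by (rule distrib_left)
  then have "(m - l) * Rc l g x = Rc l f x - Rc m f x"
    unfolding e2 e3 s1 k1 s2 by simp
  then show ?thesis unfolding g_def by simp
qed

end

lemma ul_sum:
  fixes f :: "'i \<Rightarrow> 'n \<Rightarrow> 'x \<Rightarrow> real"
  assumes "finite I" "\<And>i. i \<in> I \<Longrightarrow> uniform_limit X (f i) (g i) F"
  shows "uniform_limit X (\<lambda>n x. \<Sum>i\<in>I. f i n x) (\<lambda>x. \<Sum>i\<in>I. g i x) F"
  using assms
proof (induction I rule: finite_induct)
  case empty
  then show ?case by (simp add: uniform_limit_const)
next
  case (insert i I)
  have "uniform_limit X (\<lambda>n x. f i n x + (\<Sum>i\<in>I. f i n x)) (\<lambda>x. g i x + (\<Sum>i\<in>I. g i x)) F"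
    by (rule uniform_limit_add) (use insert in auto)
  then show ?case using insert by simp
qed

context main begin

lemma Rd_nonneg:
  assumes l: "l > 0" and f: "f \<in> CS Su" and f0: "\<And>x. x \<in> Su \<Longrightarrow> 0 \<le> f x"
  shows "0 \<le> Rd l f y"
proof (cases "y \<in> Su")
  case True
  then obtain k where k: "k \<in> Idx" "y \<in> S k" unfolding Su_eq by auto
  have "0 \<le> R k l (fr f k) y"
  proof (rule fres.pos[OF Rf[OF k(1)] l restr[OF k(1) f] _ k(2)])
    fix x assume "x \<in> S k" then show "0 \<le> f x * indicator (S k) x" using f0 S_sub[OF k(1)] by auto
  qed
  then show ?thesis using Rd_on[OF l f k] by simp
next
  case False then show ?thesis using Rd_out[OF l f False] by simp
qed

lemma Rc_pos:
  assumes l: "l > 0" and f: "f \<in> CS Su" and f0: "\<And>x. x \<in> Su \<Longrightarrow> 0 \<le> f x"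
  shows "0 \<le> Rc l f x"
proof -
  obtain c where c: "lsys IJ (Nm l) c" using lsys_l[OF l] by blast
  have b0: "0 \<le> bv l f q" if "q \<in> IJ" for q
    by (rule int_nonneg[OF that]) (rule Rd_nonneg[OF l f f0])
  have u0: "0 \<le> uc l f q" if q: "q \<in> IJ" for q
    using lsys.nonneg[OF c, of "uc l f" "bv l f" q] u_prop[OF c, of f] b0 q by blast
  have "0 \<le> (\<Sum>q\<in>IJ. uc l f q * ell q l x)"
    by (intro sum_nonneg mult_nonneg_nonneg u0 ell_nonneg l)
  then show ?thesis unfolding Rc_eq using Rd_nonneg[OF l f f0, of x] by simp
qed

lemma T_eq:
  assumes l: "l > 0" and q: "q \<in> IJ"
  shows "(\<Sum>r\<in>IJ. Nm l q r) + l * bv l (indicator Su) q = measure (p q) (space (p q))"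
proof -
  have iE: "integrable (p q) (\<lambda>x. \<Sum>r\<in>IJ. ell r l x)" by (rule integrable_CS[OF q E_CS[OF l]])
  have iR: "integrable (p q) (\<lambda>x. l * Rd l (indicator Su) x)"
    by (rule Bochner_Integration.integrable_mult_right) (rule int_Rd[OF q l ind_Su_CS])
  have "(\<Sum>r\<in>IJ. Nm l q r) + l * bv l (indicator Su) q
      = integral\<^sup>L (p q) (\<lambda>x. \<Sum>r\<in>IJ. ell r l x) + integral\<^sup>L (p q) (\<lambda>x. l * Rd l (indicator Su) x)"
    unfolding rowsum[OF q l] by simp
  also have "\<dots> = integral\<^sup>L (p q) (\<lambda>x. (\<Sum>r\<in>IJ. ell r l x) + l * Rd l (indicator Su) x)"
    by (rule Bochner_Integration.integral_add[OF iE iR, symmetric])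
  also have "\<dots> = integral\<^sup>L (p q) (\<lambda>x. 1)"
    by (rule Bochner_Integration.integral_cong[OF refl]) (use E_plus[OF l] space_p[OF q] in auto)
  also have "\<dots> = measure (p q) (space (p q))" by simp
  finally show ?thesis .
qed

lemma sub1:
  assumes l: "l > 0" and x: "x \<in> Su"
  shows "l * Rc l (indicator Su) x \<le> 1"
proof -
  obtain c where c: "lsys IJ (Nm l) c" using lsys_l[OF l] by blast
  define w where "w = uc l (indicator Su)"
  note up = u_prop[OF c, of "indicator Su", folded w_def]
  define v where "v q = (if q \<in> IJ then 1 / l - w q else 0)" for q
  have wle: "l * w q \<le> 1" if q: "q \<in> IJ" for q
  proof -
    interpret P: subprob_space "p q" by (rule p_subprob[OF q])
    have "0 \<le> v q"
    proof (rule lsys.nonneg[OF c, where b="\<lambda>q. (1 - ((\<Sum>r\<in>IJ. Nm l q r) + l * bv l (indicator Su) q)) / l"])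
      fix q assume q: "q \<in> IJ"
      interpret P: subprob_space "p q" by (rule p_subprob[OF q])
      show "0 \<le> (1 - ((\<Sum>r\<in>IJ. Nm l q r) + l * bv l (indicator Su) q)) / l"
        unfolding T_eq[OF l q] using P.subprob_measure_le_1 l by simp
    next
      fix q assume q: "q \<in> IJ"
      have "(\<Sum>r\<in>IJ. Nm l q r * v r) = (\<Sum>r\<in>IJ. Nm l q r) / l - (\<Sum>r\<in>IJ. Nm l q r * w r)"
        by (simp add: v_def right_diff_distrib sum_subtractf sum_divide_distrib)
      moreover have "w q - (\<Sum>r\<in>IJ. Nm l q r * w r) = bv l (indicator Su) q" using up q by blast
      ultimately show "v q - (\<Sum>r\<in>IJ. Nm l q r * v r) = (1 - ((\<Sum>r\<in>IJ. Nm l q r) + l * bv l (indicator Su) q)) / l"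
        using q l by (simp add: v_def field_simps)
    qed (rule q)
    then show ?thesis using q l by (simp add: v_def field_simps)
  qed
  have "l * Rc l (indicator Su) x = l * Rd l (indicator Su) x + (\<Sum>q\<in>IJ. (l * w q) * ell q l x)"
    by (simp add: Rc_eq w_def distrib_left sum_distrib_left mult.assoc)
  also have "\<dots> \<le> l * Rd l (indicator Su) x + (\<Sum>q\<in>IJ. ell q l x)"
  proof (intro add_left_mono sum_mono)
    fix q assume q: "q \<in> IJ"
    show "l * w q * ell q l x \<le> ell q l x"
      using mult_right_mono[OF wle[OF q] ell_nonneg[OF q l, of x]] by simp
  qed
  also have "\<dots> = 1" using E_plus[OF l, of x] x by simp
  finally show ?thesis .
qed

lemma cons1:
  assumes l: "l > 0" and x: "x \<in> Su" and prob: "\<forall>q\<in>IJ. prob_space (p q)"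
  shows "l * Rc l (indicator Su) x = 1"
proof -
  obtain c where c: "lsys IJ (Nm l) c" using lsys_l[OF l] by blast
  have T1: "(\<Sum>r\<in>IJ. Nm l q r) + l * bv l (indicator Su) q = 1" if q: "q \<in> IJ" for q
    using T_eq[OF l q] prob_space.prob_space[of "p q"] prob q by simp
  have w: "uc l (indicator Su) = (\<lambda>q. if q \<in> IJ then 1 / l else 0)"
  proof (rule u_eqI[OF c])
    show "\<forall>q. q \<notin> IJ \<longrightarrow> (if q \<in> IJ then 1 / l else 0) = 0" by simp
    show "\<forall>q\<in>IJ. (if q \<in> IJ then 1 / l else 0) - (\<Sum>r\<in>IJ. Nm l q r * (if r \<in> IJ then 1 / l else 0)) = bv l (indicator Su) q"
    proof
      fix q assume q: "q \<in> IJ"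
      have "(\<Sum>r\<in>IJ. Nm l q r * (if r \<in> IJ then 1 / l else 0)) = (\<Sum>r\<in>IJ. Nm l q r) / l"
        by (simp add: sum_divide_distrib)
      then show "(if q \<in> IJ then 1 / l else 0) - (\<Sum>r\<in>IJ. Nm l q r * (if r \<in> IJ then 1 / l else 0)) = bv l (indicator Su) q"
        using T1[OF q] q l by (simp add: field_simps)
    qed
  qed
  have "l * Rc l (indicator Su) x = l * Rd l (indicator Su) x + (\<Sum>q\<in>IJ. (l * uc l (indicator Su) q) * ell q l x)"
    by (simp add: Rc_eq distrib_left sum_distrib_left mult.assoc)
  also have "(\<Sum>q\<in>IJ. (l * uc l (indicator Su) q) * ell q l x) = (\<Sum>q\<in>IJ. ell q l x)"
    by (rule sum.cong[OF refl]) (use l in \<open>simp add: w\<close>)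
  also have "l * Rd l (indicator Su) x + (\<Sum>q\<in>IJ. ell q l x) = 1" using E_plus[OF l, of x] x by simp
  finally show ?thesis .
qed


lemma ell_ul:
  assumes q: "q \<in> IJ"
  shows "uniform_limit Su (\<lambda>l x. ell q l x) (\<lambda>x. 0) at_top"
proof (rule uniform_limitI)
  fix e :: real assume e: "e > 0"
  have "\<forall>\<^sub>F l in at_top. \<forall>x\<in>Su. dist (l * R (fst q) l (\<phi> (fst q) (snd q)) x) (\<phi> (fst q) (snd q) x) < e"
    by (rule uniform_limitD[OF fres.uniform_anywhere[OF Rf[OF IJ_fst'[OF q]] phi_CS[OF q]] e])
  then show "\<forall>\<^sub>F l in at_top. \<forall>x\<in>Su. dist (ell q l x) 0 < e"
    by eventually_elim (simp add: exit_ell_def dist_real_def abs_minus_commute)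
qed

lemma Rd_ul:
  assumes f: "f \<in> CS Su"
  shows "uniform_limit Su (\<lambda>l x. l * Rd l f x) f at_top"
proof -
  have "uniform_limit Su (\<lambda>l x. \<Sum>i\<in>Idx. l * R i l (fr f i) x) (\<lambda>x. \<Sum>i\<in>Idx. fr f i x) at_top"
  proof (rule ul_sum)
    fix i assume i: "i \<in> Idx"
    show "uniform_limit Su (\<lambda>l x. l * R i l (fr f i) x) (fr f i) at_top"
      by (rule fres.uniform_anywhere[OF Rf[OF i] restr[OF i f]])
  qed simp
  moreover have "l * Rd l f x = (\<Sum>i\<in>Idx. l * R i l (fr f i) x)" for l x
    by (simp add: Rd_eq sum_distrib_left)
  moreover have "(\<Sum>i\<in>Idx. fr f i x) = f x" if x: "x \<in> Su" for x
  proof -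
    obtain k where k: "k \<in> Idx" "x \<in> S k" using x unfolding Su_eq by auto
    have "(\<Sum>i\<in>Idx. fr f i x) = fr f k x"
      by (rule sum_single) (use k S_notin[OF _ k(1)] in auto)
    then show ?thesis using k by simp
  qed
  ultimately show ?thesis using uniform_limit_cong'[of Su "\<lambda>l x. l * Rd l f x" "\<lambda>l x. \<Sum>i\<in>Idx. l * R i l (fr f i) x" f "\<lambda>x. \<Sum>i\<in>Idx. fr f i x" at_top]
    by simp
qed

lemma coef_bound:
  assumes f: "f \<in> CS Su"
  shows "\<exists>K. \<forall>\<^sub>F l in at_top. \<forall>q\<in>IJ. \<bar>l * uc l f q\<bar> \<le> K"
proof -
  obtain Kf where Kf: "Kf \<ge> 0" "\<forall>x\<in>Su. \<bar>f x\<bar> \<le> Kf" using bnd_CS[OF f] by blast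
  have ev1: "\<forall>\<^sub>F l in at_top. \<forall>x\<in>Su. dist (l * Rd l f x) (f x) < 1"
    by (rule uniform_limitD[OF Rd_ul[OF f]]) simp
  show ?thesis
  proof (intro exI)
    show "\<forall>\<^sub>F l in at_top. \<forall>q\<in>IJ. \<bar>l * uc l f q\<bar> \<le> (Kf + 1) / (1 - 1/2)"
      using ev1 lsys_ev
    proof eventually_elim
      case (elim l)
      then have l: "l > 0" and c: "lsys IJ (Nm l) (1/2)" by auto
      note up = u_prop[OF c, of f]
      show ?case
      proof
        fix q assume q: "q \<in> IJ"
        show "\<bar>l * uc l f q\<bar> \<le> (Kf + 1) / (1 - 1/2)"
        proof (rule lsys.bound[OF c, where b="\<lambda>q. l * bv l f q"])
          fix q assume q: "q \<in> IJ"
          have "l * uc l f q - (\<Sum>r\<in>IJ. Nm l q r * (l * uc l f r)) = l * (uc l f q - (\<Sum>r\<in>IJ. Nm l q r * uc l f r))"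
            by (simp add: right_diff_distrib sum_distrib_left mult.left_commute)
          then show "l * uc l f q - (\<Sum>r\<in>IJ. Nm l q r * (l * uc l f r)) = l * bv l f q"
            using up q by simp
        next
          fix q assume q: "q \<in> IJ"
          have "l * bv l f q = integral\<^sup>L (p q) (\<lambda>x. l * Rd l f x)" by simp
          also have "\<bar>\<dots>\<bar> \<le> Kf + 1"
          proof (rule int_abs[OF q])
            show "integrable (p q) (\<lambda>x. l * Rd l f x)"
              by (rule Bochner_Integration.integrable_mult_right) (rule int_Rd[OF q l f])
            fix x assume x: "x \<in> Su"
            have "\<bar>l * Rd l f x - f x\<bar> < 1" using elim(1) x by (simp add: dist_real_def)
            moreover have "\<bar>f x\<bar> \<le> Kf" using Kf(2) x by blast
            ultimately show "\<bar>l * Rd l f x\<bar> \<le> Kf + 1" by (auto simp: abs_le_iff abs_less_iff)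
          qed (use Kf in simp)
          finally show "\<bar>l * bv l f q\<bar> \<le> Kf + 1" .
        qed (rule q)
      qed
    qed
  qed
qed

lemma term_ul:
  assumes q: "q \<in> IJ" and f: "f \<in> CS Su"
  shows "uniform_limit Su (\<lambda>l x. (l * uc l f q) * ell q l x) (\<lambda>x. 0) at_top"
proof (rule uniform_limitI)
  fix e :: real assume e: "e > 0"
  obtain K where K: "\<forall>\<^sub>F l in at_top. \<forall>q\<in>IJ. \<bar>l * uc l f q\<bar> \<le> K" using coef_bound[OF f] by blast
  define e' where "e' = e / (\<bar>K\<bar> + 1)"
  have e': "e' > 0" unfolding e'_def using e by simp
  have Ke: "\<bar>K\<bar> * e' < e"
  proof -
    have "\<bar>K\<bar> * e' = e * (\<bar>K\<bar> / (\<bar>K\<bar> + 1))" unfolding e'_def by simp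
    also have "\<bar>K\<bar> / (\<bar>K\<bar> + 1) < 1" by simp
    then have "e * (\<bar>K\<bar> / (\<bar>K\<bar> + 1)) < e * 1" using e by (intro mult_strict_left_mono) auto
    finally show ?thesis by simp
  qed
  have E: "\<forall>\<^sub>F l in at_top. \<forall>x\<in>Su. dist (ell q l x) 0 < e'"
    by (rule uniform_limitD[OF ell_ul[OF q] e'])
  from K E show "\<forall>\<^sub>F l in at_top. \<forall>x\<in>Su. dist (l * uc l f q * ell q l x) 0 < e"
  proof eventually_elim
    case (elim l)
    show ?case
    proof
      fix x assume x: "x \<in> Su"
      have c: "\<bar>l * uc l f q\<bar> \<le> \<bar>K\<bar>" using elim(1) q by force
      have "\<bar>ell q l x\<bar> < e'" using elim(2) x by (simp add: dist_real_def)
      then have el: "\<bar>ell q l x\<bar> \<le> e'" by simp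
      have "\<bar>l * uc l f q * ell q l x\<bar> = \<bar>l * uc l f q\<bar> * \<bar>ell q l x\<bar>" by (simp add: abs_mult)
      also have "\<dots> \<le> \<bar>K\<bar> * e'" by (rule mult_mono[OF c el]) auto
      finally show "dist (l * uc l f q * ell q l x) 0 < e" using Ke by (simp add: dist_real_def)
    qed
  qed
qed

lemma Rc_ul:
  assumes f: "f \<in> CS Su"
  shows "uniform_limit Su (\<lambda>l x. l * Rc l f x) f at_top"
proof -
  have B: "uniform_limit Su (\<lambda>l x. \<Sum>q\<in>IJ. (l * uc l f q) * ell q l x) (\<lambda>x. \<Sum>q\<in>IJ. 0) at_top"
    by (rule ul_sum[OF fin_IJ]) (rule term_ul[OF _ f])
  have AB: "uniform_limit Su (\<lambda>l x. l * Rd l f x + (\<Sum>q\<in>IJ. (l * uc l f q) * ell q l x)) (\<lambda>x. f x + (\<Sum>q\<in>IJ. 0)) at_top"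
    by (rule uniform_limit_add[OF Rd_ul[OF f] B])
  have eq: "l * Rc l f x = l * Rd l f x + (\<Sum>q\<in>IJ. (l * uc l f q) * ell q l x)" for l x
    by (simp add: Rc_eq distrib_left sum_distrib_left mult.assoc)
  show ?thesis using AB unfolding eq by simp
qed

lemma main_result:
  "feller_resolvent Su (R_co Nn M \<kappa> S R \<phi> p)
    \<and> ((\<forall>q\<in>IJ. prob_space (p q)) \<longrightarrow> conservative_resolvent Su (R_co Nn M \<kappa> S R \<phi> p))"
proof
  show "feller_resolvent Su (R_co Nn M \<kappa> S R \<phi> p)"
    unfolding feller_resolvent_def
  proof (intro conjI allI impI ballI)
    fix l :: real and f assume "l > 0" "f \<in> CS Su"
    then show "Rc l f \<in> CS Su" by (rule Rc_CS)
  next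
    fix l :: real and f g a b assume "l > 0" "f \<in> CS Su" "g \<in> CS Su"
    then show "Rc l (\<lambda>x. a * f x + b * g x) = (\<lambda>x. a * Rc l f x + b * Rc l g x)" by (rule Rc_lin)
  next
    fix l m :: real and f x assume "l > 0" "m > 0" "f \<in> CS Su"
    then show "Rc l f x - Rc m f x = (m - l) * Rc l (Rc m f) x" by (rule Rc_hilbert)
  next
    fix f assume "f \<in> CS Su"
    then show "uniform_limit Su (\<lambda>l x. l * Rc l f x) f at_top" by (rule Rc_ul)
  next
    fix l :: real and f x assume "l > 0" "f \<in> CS Su" "\<forall>x\<in>Su. 0 \<le> f x" "x \<in> Su"
    then show "0 \<le> Rc l f x" using Rc_pos by blast
  next
    fix l :: real and x assume "l > 0" "x \<in> Su"
    then show "l * Rc l (indicator Su) x \<le> 1" by (rule sub1)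
  qed
next
  show "(\<forall>q\<in>IJ. prob_space (p q)) \<longrightarrow> conservative_resolvent Su (R_co Nn M \<kappa> S R \<phi> p)"
    unfolding conservative_resolvent_def using cons1 by blast
qed

end

theorem theorem5:
  fixes Nn M :: nat
    and S :: "nat \<Rightarrow> 'a::metric_space set"
    and R :: "nat \<Rightarrow> real \<Rightarrow> ('a \<Rightarrow> real) \<Rightarrow> ('a \<Rightarrow> real)"
    and \<kappa> :: "nat \<Rightarrow> nat"
    and \<phi> :: "nat \<Rightarrow> nat \<Rightarrow> 'a \<Rightarrow> real"
    and p :: "nat \<times> nat \<Rightarrow> 'a measure"
  assumes M_bounds: "1 \<le> M" "M \<le> Nn"
    and S_compact: "\<And>i. i \<in> {1..Nn} \<Longrightarrow> compact (S i)"
    and S_disjoint: "\<And>i k. i \<in> {1..Nn} \<Longrightarrow> k \<in> {1..Nn} \<Longrightarrow> i \<noteq> k \<Longrightarrow> S i \<inter> S k = {}"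
    and R_feller: "\<And>i. i \<in> {1..Nn} \<Longrightarrow> feller_resolvent (S i) (R i)"
    and nonconservative: "\<And>i. i \<in> {1..M} \<Longrightarrow> \<not> conservative_resolvent (S i) (R i)"
    and conservative: "\<And>i. i \<in> {M+1..Nn} \<Longrightarrow> conservative_resolvent (S i) (R i)"
    and kernel_trivial: "\<And>i f. i \<in> {1..M} \<Longrightarrow> resolvent_generator (S i) (R i) f (\<lambda>x. 0)
                            \<Longrightarrow> f = (\<lambda>x. 0)"
    and phi_cont: "\<And>i j. i \<in> {1..M} \<Longrightarrow> j \<in> {1..\<kappa> i} \<Longrightarrow> \<phi> i j \<in> CS (S i)"
    and phi_bounds: "\<And>i j x. i \<in> {1..M} \<Longrightarrow> j \<in> {1..\<kappa> i} \<Longrightarrow> x \<in> S i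
                       \<Longrightarrow> 0 \<le> \<phi> i j x \<and> \<phi> i j x \<le> 1"
    and phi_excessive: "\<And>i j l x. i \<in> {1..M} \<Longrightarrow> j \<in> {1..\<kappa> i} \<Longrightarrow> l > 0 \<Longrightarrow> x \<in> S i
                       \<Longrightarrow> l * R i l (\<phi> i j) x \<le> \<phi> i j x"
    and phi_not_invariant: "\<And>i j l. i \<in> {1..M} \<Longrightarrow> j \<in> {1..\<kappa> i} \<Longrightarrow> l > 0
                       \<Longrightarrow> (\<lambda>x. l * R i l (\<phi> i j) x) \<noteq> \<phi> i j"
    and phi_sum: "\<And>i x. i \<in> {1..M} \<Longrightarrow> x \<in> S i \<Longrightarrow> (\<Sum>j\<in>{1..\<kappa> i}. \<phi> i j x) = 1"
    and p_sets: "\<And>q. q \<in> idx_IJ M \<kappa> \<Longrightarrow> sets (p q) = sets (restrict_space borel (S_union Nn S))"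
    and p_subprob: "\<And>q. q \<in> idx_IJ M \<kappa> \<Longrightarrow> subprob_space (p q)"
  shows "feller_resolvent (S_union Nn S) (R_co Nn M \<kappa> S R \<phi> p)
    \<and> ((\<forall>q\<in>idx_IJ M \<kappa>. prob_space (p q))
         \<longrightarrow> conservative_resolvent (S_union Nn S) (R_co Nn M \<kappa> S R \<phi> p))"
proof -
  have L: "main Nn M S R \<kappa> \<phi> p"
  proof (rule main.intro)
    show "M \<le> Nn" by (rule M_bounds(2))
  next
    fix i assume "i \<in> {1..Nn}" then show "compact (S i)" by (rule S_compact)
  next
    fix i k assume "i \<in> {1..Nn}" "k \<in> {1..Nn}" "i \<noteq> k" then show "S i \<inter> S k = {}" by (rule S_disjoint)
  next
    fix i assume "i \<in> {1..Nn}" then show "feller_resolvent (S i) (R i)" by (rule R_feller)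
  next
    fix i assume "i \<in> {M+1..Nn}" then show "conservative_resolvent (S i) (R i)" by (rule conservative)
  next
    fix i j assume "i \<in> {1..M}" "j \<in> {1..\<kappa> i}" then show "\<phi> i j \<in> CS (S i)" by (rule phi_cont)
  next
    fix i j l x assume "i \<in> {1..M}" "j \<in> {1..\<kappa> i}" "(l::real) > 0" "x \<in> S i"
    then show "l * R i l (\<phi> i j) x \<le> \<phi> i j x" by (rule phi_excessive)
  next
    fix i x assume "i \<in> {1..M}" "x \<in> S i" then show "(\<Sum>j\<in>{1..\<kappa> i}. \<phi> i j x) = 1" by (rule phi_sum)
  next
    fix q assume "q \<in> idx_IJ M \<kappa>" then show "sets (p q) = sets (restrict_space borel (S_union Nn S))" by (rule p_sets)
  next
    fix q assume "q \<in> idx_IJ M \<kappa>" then show "subprob_space (p q)" by (rule p_subprob)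
  qed
  show ?thesis by (rule main.main_result[OF L])
qed

end
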